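(* Let $\{X_n,n\geq1\}$ be a $\varphi$-mixing sequence of random variables with common marginal distribution function $F$, whose mixing coefficients satisfy $\sum_{n=1}^\infty\varphi^{1/2}(n)<\infty$. Fix $p\in(0,1)$ and let $\xi_p=\inf\{x:F(x)\geq p\}$. Assume that $F$ possesses a positive continuous density $f$ in a neighborhood $\mathscr{N}_p$ of $\xi_p$ such that $0<d=\sup\{f(x):x\in\mathscr{N}_p\}<\infty$. Let $C_3=4\big[1+4\sum_{n=1}^\infty\varphi^{1/2}(n)\big]$. For any $\theta>0$ put $$\tau_n=\frac{\sqrt{16C_3+\theta}\,(\log n)^{3/2}}{n^{1/2}(\log\log n)^{1/2}},\qquad \mathscr{E}_n=[\xi_p-\tau_n,\xi_p+\tau_n].$$ Then with probability 1, $$\sup_{x\in\mathscr{E}_n}|F_n(x)-F(x)|\leq(1+d)\left(\frac{(16C_3+\theta)\log n}{4n}\right)^{1/2}\quad\text{for all } n\text{ sufficiently large}.$$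
   Context: All random variables are defined on a probability space $(\Omega,\mathcal{F},P)$. $F_n(x)=\frac1n\sum_{i=1}^n I(X_i\leq x)$ is the empirical distribution function of $X_1,\dots,X_n$. For $n\leq m$ let $\mathcal{F}_n^m=\sigma(X_i,n\leq i\leq m)$. For sub-$\sigma$-algebras $\mathcal{B},\mathcal{R}$ let $\varphi(\mathcal{B},\mathcal{R})=\sup_{A\in\mathcal{B},B\in\mathcal{R},P(A)>0}|P(B\mid A)-P(B)|$, and the mixing coefficients are $\varphi(n)=\sup_{k\geq1}\varphi(\mathcal{F}_1^k,\mathcal{F}_{k+n}^\infty)$. The sequence is called $\varphi$-mixing if $\varphi(n)\downarrow0$ as $n\to\infty$. *)

theory Defs
  imports "HOL-Probability.Probability"
begin

definition gen_sigma :: "'a measure \<Rightarrow> (nat \<Rightarrow> 'a \<Rightarrow> real) \<Rightarrow> nat set \<Rightarrow> 'a set set" where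
  "gen_sigma M X I = sigma_sets (space M)
     {X i -` A \<inter> space M | i A. i \<in> I \<and> A \<in> sets borel}"

definition phi_sets :: "'a measure \<Rightarrow> 'a set set \<Rightarrow> 'a set set \<Rightarrow> real" where
  "phi_sets M \<B> \<R> = Sup {\<bar>measure M (A \<inter> B) / measure M A - measure M B\<bar> | A B.
      A \<in> \<B> \<and> B \<in> \<R> \<and> measure M A > 0}"

definition phi_mix :: "'a measure \<Rightarrow> (nat \<Rightarrow> 'a \<Rightarrow> real) \<Rightarrow> nat \<Rightarrow> real" where
  "phi_mix M X n = (SUP k\<in>{1..}. phi_sets M (gen_sigma M X {1..k}) (gen_sigma M X {k+n..}))"

definition emp_df :: "(nat \<Rightarrow> 'a \<Rightarrow> real) \<Rightarrow> nat \<Rightarrow> 'a \<Rightarrow> real \<Rightarrow> real" where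
  "emp_df X n \<omega> x = card {i \<in> {1..n}. X i \<omega> \<le> x} / real n"

end

theory Submission
  imports Defs "HOL-Real_Asymp.Real_Asymp"
begin


definition subM :: "'a measure \<Rightarrow> (nat \<Rightarrow> 'a \<Rightarrow> real) \<Rightarrow> nat set \<Rightarrow> 'a measure" where
  "subM M X I = sigma (space M) {X i -` A \<inter> space M | i A. i \<in> I \<and> A \<in> sets borel}"

lemma sets_subM: "sets (subM M X I) = gen_sigma M X I"
  unfolding subM_def gen_sigma_def by (rule sets_measure_of) auto

lemma space_subM: "space (subM M X I) = space M"
  unfolding subM_def by (rule space_measure_of) auto

locale mixing = prob_space M for M :: "'a measure" +
  fixes X :: "nat \<Rightarrow> 'a \<Rightarrow> real"
  assumes rv: "\<And>i. i \<ge> 1 \<Longrightarrow> X i \<in> borel_measurable M"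
    and mix_mono: "\<And>n. n \<ge> 1 \<Longrightarrow> phi_mix M X (Suc n) \<le> phi_mix M X n"
begin

abbreviation "\<phi> \<equiv> phi_mix M X"

lemma gen_sub: assumes "I \<subseteq> {1..}" shows "gen_sigma M X I \<subseteq> sets M"
  unfolding gen_sigma_def
proof (rule sigma_algebra.sigma_sets_subset[OF sets.sigma_algebra_axioms])
  show "{X i -` A \<inter> space M |i A. i \<in> I \<and> A \<in> sets borel} \<subseteq> sets M"
  proof safe
    fix i and A :: "real set" assume "i \<in> I" "A \<in> sets borel"
    then have "X i \<in> borel_measurable M" using assms rv by auto
    then show "X i -` A \<inter> space M \<in> sets M" using \<open>A \<in> sets borel\<close> by (rule measurable_sets)
  qed
qed

lemma gen_top: "space M \<in> gen_sigma M X I"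
  unfolding gen_sigma_def by (rule sigma_sets_top)

lemma elem_le1:
  assumes "A \<in> sets M" "B \<in> sets M" "measure M A > 0"
  shows "\<bar>measure M (A \<inter> B) / measure M A - measure M B\<bar> \<le> 1"
proof -
  have "measure M (A \<inter> B) \<le> measure M A" by (intro finite_measure_mono) (use assms in auto)
  then have "measure M (A \<inter> B) / measure M A \<le> 1" "0 \<le> measure M (A \<inter> B) / measure M A"
    using assms by auto
  moreover have "measure M B \<le> 1" "0 \<le> measure M B" by auto
  ultimately show ?thesis by linarith
qed

lemma phi_sets_props:
  assumes "k \<ge> 1"
  shows "bdd_above {\<bar>measure M (A \<inter> B) / measure M A - measure M B\<bar> | A B.
      A \<in> gen_sigma M X {1..k} \<and> B \<in> gen_sigma M X {k+n..} \<and> measure M A > 0}"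
    and "0 \<in> {\<bar>measure M (A \<inter> B) / measure M A - measure M B\<bar> | A B.
      A \<in> gen_sigma M X {1..k} \<and> B \<in> gen_sigma M X {k+n..} \<and> measure M A > 0}"
    and "phi_sets M (gen_sigma M X {1..k}) (gen_sigma M X {k+n..}) \<le> 1"
    and "0 \<le> phi_sets M (gen_sigma M X {1..k}) (gen_sigma M X {k+n..})"
proof -
  have s1: "gen_sigma M X {1..k} \<subseteq> sets M" "gen_sigma M X {k+n..} \<subseteq> sets M"
    using gen_sub assms by auto
  show b: "bdd_above {\<bar>measure M (A \<inter> B) / measure M A - measure M B\<bar> | A B.
      A \<in> gen_sigma M X {1..k} \<and> B \<in> gen_sigma M X {k+n..} \<and> measure M A > 0}"
    by (rule bdd_aboveI[of _ 1]) (use elem_le1 s1 in blast)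
  show z: "0 \<in> {\<bar>measure M (A \<inter> B) / measure M A - measure M B\<bar> | A B.
      A \<in> gen_sigma M X {1..k} \<and> B \<in> gen_sigma M X {k+n..} \<and> measure M A > 0}"
    by (rule CollectI, rule exI[of _ "space M"], rule exI[of _ "space M"]) (auto simp: gen_top prob_space)
  show "phi_sets M (gen_sigma M X {1..k}) (gen_sigma M X {k+n..}) \<le> 1"
    unfolding phi_sets_def by (rule cSup_least) (use z elem_le1 s1 in blast)+
  show "0 \<le> phi_sets M (gen_sigma M X {1..k}) (gen_sigma M X {k+n..})"
    unfolding phi_sets_def by (rule cSup_upper[OF z b])
qed

lemma phi_bdd: "bdd_above ((\<lambda>k. phi_sets M (gen_sigma M X {1..k}) (gen_sigma M X {k+n..})) ` {1..})"
  by (rule bdd_aboveI[of _ 1]) (use phi_sets_props in auto)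

lemma phi_ge0: "0 \<le> \<phi> n"
  unfolding phi_mix_def
  by (rule order.trans[OF phi_sets_props(4)[of 1 n]], simp, rule cSUP_upper[OF _ phi_bdd]) auto

lemma phi_le1: "\<phi> n \<le> 1"
  unfolding phi_mix_def
  by (rule cSUP_least) (use phi_sets_props(3) in auto)

lemma phi_ineq:
  assumes "k \<ge> 1" "A \<in> gen_sigma M X {1..k}" "B \<in> gen_sigma M X {k+n..}"
  shows "measure M (A \<inter> B) \<le> measure M A * (measure M B + \<phi> n)"
proof (cases "measure M A > 0")
  case False
  have "A \<in> sets M" using gen_sub[of "{1..k}"] assms by auto
  then have "measure M A = 0" using False measure_nonneg[of M A] by linarith
  moreover have "measure M (A \<inter> B) \<le> measure M A"
    using \<open>A \<in> sets M\<close> by (intro finite_measure_mono) auto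
  ultimately show ?thesis by simp
next
  case True
  have "\<bar>measure M (A \<inter> B) / measure M A - measure M B\<bar> \<le> phi_sets M (gen_sigma M X {1..k}) (gen_sigma M X {k+n..})"
    unfolding phi_sets_def by (rule cSup_upper[OF _ phi_sets_props(1)[OF assms(1)]]) (use assms True in blast)
  also have "\<dots> \<le> \<phi> n" unfolding phi_mix_def
    by (rule cSUP_upper[OF _ phi_bdd]) (use assms in auto)
  finally have "measure M (A \<inter> B) / measure M A \<le> measure M B + \<phi> n" by linarith
  then have "measure M (A \<inter> B) / measure M A * measure M A \<le> (measure M B + \<phi> n) * measure M A"
    using True by (intro mult_right_mono) auto
  moreover have "measure M (A \<inter> B) / measure M A * measure M A = measure M (A \<inter> B)"
    using True by simp
  ultimately show ?thesis by (metis mult.commute)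
qed

lemma dummy: True by simp

lemma phi_antimono: assumes "1 \<le> L" "L \<le> g" shows "\<phi> g \<le> \<phi> L"
  using assms(2)
proof (induction g rule: dec_induct)
  case (step m) then show ?case using mix_mono[of m] assms(1) by linarith
qed simp

end


lemma (in prob_space) integral_finite_range:
  fixes f :: "'a \<Rightarrow> real"
  assumes f[measurable]: "f \<in> borel_measurable M" and fin: "finite (f ` space M)" and C[measurable]: "C \<in> sets M"
  shows "integral\<^sup>L M (\<lambda>x. indicator C x * f x) = (\<Sum>v\<in>f ` space M. v * prob (C \<inter> {x\<in>space M. f x = v}))"
proof -
  have meas: "C \<inter> {x\<in>space M. f x = v} \<in> events" for v by measurable
  have pt: "indicator C x * f x = (\<Sum>v\<in>f ` space M. v * indicator (C \<inter> {x\<in>space M. f x = v}) x)"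
    if x: "x \<in> space M" for x
  proof -
    have "(\<Sum>v\<in>f ` space M. v * indicator (C \<inter> {x\<in>space M. f x = v}) x)
        = (\<Sum>v\<in>f ` space M. if v = f x then f x * indicator C x else 0)"
      by (intro sum.cong) (auto simp: indicator_def x)
    also have "\<dots> = f x * indicator C x" using x fin by (simp add: sum.delta')
    finally show ?thesis by simp
  qed
  have "integral\<^sup>L M (\<lambda>x. indicator C x * f x) = integral\<^sup>L M (\<lambda>x. \<Sum>v\<in>f ` space M. v * indicator (C \<inter> {x\<in>space M. f x = v}) x)"
    by (rule Bochner_Integration.integral_cong[OF refl]) (rule pt)
  also have "\<dots> = (\<Sum>v\<in>f ` space M. integral\<^sup>L M (\<lambda>x. v * indicator (C \<inter> {x\<in>space M. f x = v}) x))"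
    by (rule Bochner_Integration.integral_sum) (auto intro!: integrable_mult_right integrable_real_indicator meas simp: less_top[symmetric])
  also have "\<dots> = (\<Sum>v\<in>f ` space M. v * prob (C \<inter> {x\<in>space M. f x = v}))"
    by (intro sum.cong refl) (simp add: meas)
  finally show ?thesis .
qed

lemma (in prob_space) expectation_finite_range:
  fixes f :: "'a \<Rightarrow> real"
  assumes f[measurable]: "f \<in> borel_measurable M" and fin: "finite (f ` space M)"
  shows "expectation f = (\<Sum>v\<in>f ` space M. v * prob {x\<in>space M. f x = v})"
proof -
  have "expectation f = integral\<^sup>L M (\<lambda>x. indicator (space M) x * f x)"
    by (rule Bochner_Integration.integral_cong[OF refl]) auto
  also have "\<dots> = (\<Sum>v\<in>f ` space M. v * prob (space M \<inter> {x\<in>space M. f x = v}))"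
    by (rule integral_finite_range[OF f fin sets.top])
  also have "\<dots> = (\<Sum>v\<in>f ` space M. v * prob {x\<in>space M. f x = v})"
    by (intro sum.cong refl) (simp add: Int_absorb1)
  finally show ?thesis .
qed

context mixing begin

lemma subalg: "I \<subseteq> {1..} \<Longrightarrow> subalgebra M (subM M X I)"
  unfolding subalgebra_def using gen_sub by (auto simp: space_subM sets_subM)

lemma sub_meas: assumes "I \<subseteq> {1..}" "V \<in> borel_measurable (subM M X I)" shows "V \<in> borel_measurable M"
  using measurable_from_subalg[OF subalg[OF assms(1)] assms(2)] .

lemma sub_set: assumes "V \<in> borel_measurable (subM M X I)" "T \<in> sets borel"
  shows "{x\<in>space M. V x \<in> T} \<in> gen_sigma M X I"
proof -
  have "{x\<in>space M. V x \<in> T} = V -` T \<inter> space (subM M X I)" by (auto simp: space_subM)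
  moreover have "V -` T \<inter> space (subM M X I) \<in> sets (subM M X I)"
    by (rule measurable_sets[OF assms])
  ultimately show ?thesis by (simp add: sets_subM)
qed

lemma ind_V:
  assumes k: "k \<ge> 1" and A: "A \<in> gen_sigma M X {1..k}"
    and V: "V \<in> borel_measurable (subM M X {k+g..})" and fin: "finite (V ` space M)"
    and Vb: "\<And>x. x \<in> space M \<Longrightarrow> 0 \<le> V x \<and> V x \<le> B"
  shows "integral\<^sup>L M (\<lambda>x. indicator A x * V x) \<le> prob A * (expectation V + \<phi> g * B)"
proof -
  have VM[measurable]: "V \<in> borel_measurable M" by (rule sub_meas[OF _ V]) (use k in auto)
  have AM[measurable]: "A \<in> events" using A gen_sub[of "{1..k}"] by auto
  define Bv where "Bv v = {x\<in>space M. V x = v}" for v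
  have BvM[measurable]: "Bv v \<in> events" for v unfolding Bv_def by measurable
  define D where "D v = prob (A \<inter> Bv v) - prob A * prob (Bv v)" for v
  define R where "R = V ` space M"
  have E1: "integral\<^sup>L M (\<lambda>x. indicator A x * V x) = (\<Sum>v\<in>R. v * prob (A \<inter> Bv v))"
    unfolding R_def Bv_def by (rule integral_finite_range[OF VM fin AM])
  have E2: "expectation V = (\<Sum>v\<in>R. v * prob (Bv v))"
    unfolding R_def Bv_def by (rule expectation_finite_range[OF VM fin])
  have diff: "integral\<^sup>L M (\<lambda>x. indicator A x * V x) - prob A * expectation V = (\<Sum>v\<in>R. v * D v)"
    unfolding E1 E2 D_def by (simp add: sum_distrib_left sum_subtractf algebra_simps)
  define T where "T = {v\<in>R. D v > 0}"
  have finR: "finite R" using fin R_def by simp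
  have TR: "T \<subseteq> R" unfolding T_def by auto
  have Rnn: "v \<in> R \<Longrightarrow> 0 \<le> v \<and> v \<le> B" for v using Vb unfolding R_def by auto
  have s1: "(\<Sum>v\<in>R. v * D v) \<le> (\<Sum>v\<in>T. v * D v)"
  proof -
    have "(\<Sum>v\<in>R. v * D v) = (\<Sum>v\<in>T. v * D v) + (\<Sum>v\<in>R-T. v * D v)"
      using sum.subset_diff[OF TR finR, of "\<lambda>v. v * D v"] by simp
    moreover have "(\<Sum>v\<in>R-T. v * D v) \<le> 0"
      by (intro sum_nonpos) (auto simp: T_def intro!: mult_nonneg_nonpos dest: Rnn)
    ultimately show ?thesis by linarith
  qed
  also have "\<dots> \<le> (\<Sum>v\<in>T. B * D v)"
    by (intro sum_mono mult_right_mono) (auto simp: T_def dest: Rnn)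
  also have "\<dots> = B * (\<Sum>v\<in>T. D v)" by (simp add: sum_distrib_left)
  also have "(\<Sum>v\<in>T. D v) = prob (A \<inter> {x\<in>space M. V x \<in> T}) - prob A * prob {x\<in>space M. V x \<in> T}"
  proof -
    have finT: "finite T" using finR TR finite_subset by blast
    have dj: "disjoint_family_on Bv T" "disjoint_family_on (\<lambda>v. A \<inter> Bv v) T"
      unfolding disjoint_family_on_def Bv_def by auto
    have u1: "{x\<in>space M. V x \<in> T} = (\<Union>v\<in>T. Bv v)" unfolding Bv_def by auto
    have u2: "A \<inter> {x\<in>space M. V x \<in> T} = (\<Union>v\<in>T. A \<inter> Bv v)" unfolding Bv_def by auto
    have "prob {x\<in>space M. V x \<in> T} = (\<Sum>v\<in>T. prob (Bv v))"
      unfolding u1 by (rule finite_measure_finite_Union[OF finT _ dj(1)]) auto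
    moreover have "prob (A \<inter> {x\<in>space M. V x \<in> T}) = (\<Sum>v\<in>T. prob (A \<inter> Bv v))"
      unfolding u2 by (rule finite_measure_finite_Union[OF finT _ dj(2)]) auto
    ultimately show ?thesis unfolding D_def by (simp add: sum_subtractf sum_distrib_left)
  qed
  also have "B * (prob (A \<inter> {x\<in>space M. V x \<in> T}) - prob A * prob {x\<in>space M. V x \<in> T}) \<le> B * (prob A * \<phi> g)"
  proof (rule mult_left_mono)
    have "{x\<in>space M. V x \<in> T} \<in> gen_sigma M X {k+g..}"
      by (rule sub_set[OF V]) (use finR TR finite_subset in \<open>blast intro: finite_imp_closed borel_closed\<close>)
    from phi_ineq[OF k A this] show "prob (A \<inter> {x\<in>space M. V x \<in> T}) - prob A * prob {x\<in>space M. V x \<in> T} \<le> prob A * \<phi> g"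
      by (simp add: algebra_simps)
    obtain x where "x \<in> space M" using not_empty by blast
    then show "0 \<le> B" using Vb by force
  qed
  finally have "integral\<^sup>L M (\<lambda>x. indicator A x * V x) - prob A * expectation V \<le> B * (prob A * \<phi> g)"
    using diff by linarith
  then show ?thesis by (simp add: algebra_simps)
qed

lemma prod_ineq:
  assumes k: "k \<ge> 1"
    and U: "U \<in> borel_measurable (subM M X {1..k})" and finU: "finite (U ` space M)"
    and Ub: "\<And>x. x \<in> space M \<Longrightarrow> 0 \<le> U x"
    and V: "V \<in> borel_measurable (subM M X {k+g..})" and fin: "finite (V ` space M)"
    and Vb: "\<And>x. x \<in> space M \<Longrightarrow> 0 \<le> V x \<and> V x \<le> B"
  shows "expectation (\<lambda>x. U x * V x) \<le> expectation U * (expectation V + \<phi> g * B)"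
proof -
  have UM[measurable]: "U \<in> borel_measurable M" by (rule sub_meas[OF _ U]) auto
  have VM[measurable]: "V \<in> borel_measurable M" by (rule sub_meas[OF _ V]) (use k in auto)
  define Au where "Au u = {x\<in>space M. U x = u}" for u
  have AuM[measurable]: "Au u \<in> events" for u unfolding Au_def by measurable
  have Aug: "Au u \<in> gen_sigma M X {1..k}" for u
  proof -
    have "Au u = {x\<in>space M. U x \<in> {u}}" unfolding Au_def by auto
    then show ?thesis using sub_set[OF U, of "{u}"] by simp
  qed
  have pt: "U x * V x = (\<Sum>u\<in>U ` space M. u * (indicator (Au u) x * V x))" if x: "x \<in> space M" for x
  proof -
    have "(\<Sum>u\<in>U ` space M. u * (indicator (Au u) x * V x)) = (\<Sum>u\<in>U ` space M. if u = U x then U x * V x else 0)"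
      by (intro sum.cong) (auto simp: indicator_def x Au_def)
    also have "\<dots> = U x * V x" using x finU by (simp add: sum.delta')
    finally show ?thesis by simp
  qed
  have intg: "integrable M (\<lambda>x. indicator (Au u) x * V x)" for u
  proof (rule integrable_const_bound[where B=B])
    show "AE x in M. norm (indicator (Au u) x * V x) \<le> B"
    proof (rule AE_I2)
      fix x assume "x \<in> space M"
      then show "norm (indicator (Au u) x * V x) \<le> B" using Vb[of x] by (auto simp: indicator_def)
    qed
  qed measurable
  have "expectation (\<lambda>x. U x * V x) = expectation (\<lambda>x. \<Sum>u\<in>U ` space M. u * (indicator (Au u) x * V x))"
    by (rule Bochner_Integration.integral_cong[OF refl]) (rule pt)
  also have "\<dots> = (\<Sum>u\<in>U ` space M. u * integral\<^sup>L M (\<lambda>x. indicator (Au u) x * V x))"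
    by (subst Bochner_Integration.integral_sum) (auto intro!: integrable_mult_right intg)
  also have "\<dots> \<le> (\<Sum>u\<in>U ` space M. u * (prob (Au u) * (expectation V + \<phi> g * B)))"
    by (intro sum_mono mult_left_mono ind_V[OF k Aug V fin Vb]) (auto dest: Ub)
  also have "\<dots> = expectation U * (expectation V + \<phi> g * B)"
    unfolding expectation_finite_range[OF UM finU] Au_def sum_distrib_right
    by (intro sum.cong refl) (simp add: algebra_simps)
  finally show ?thesis .
qed

end


definition ind :: "(nat \<Rightarrow> 'a \<Rightarrow> real) \<Rightarrow> real \<Rightarrow> nat \<Rightarrow> 'a \<Rightarrow> real" where
  "ind X y i \<omega> = (if X i \<omega> \<le> y then 1 else 0)"

definition Sm :: "(nat \<Rightarrow> 'a \<Rightarrow> real) \<Rightarrow> real \<Rightarrow> real \<Rightarrow> nat set \<Rightarrow> 'a \<Rightarrow> real" where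
  "Sm X y q I \<omega> = (\<Sum>i\<in>I. ind X y i \<omega> - q)"

lemma exp_quad: "exp (z::real) \<le> 1 + z + z\<^sup>2 * exp \<bar>z\<bar> / 2"
proof -
  obtain t where t: "\<bar>t\<bar> \<le> \<bar>z\<bar>" "exp z = (\<Sum>m<2. (z ^ m) / fact m) + (exp t / fact 2) * z ^ 2"
    using Maclaurin_exp_le[of z 2] by blast
  have "exp t \<le> exp \<bar>z\<bar>" using t(1) by simp
  then have "(exp t / 2) * z ^ 2 \<le> (exp \<bar>z\<bar> / 2) * z ^ 2" by (intro mult_right_mono) auto
  moreover have "(\<Sum>m<2. (z ^ m) / fact m) = 1 + z" by (simp add: numeral_2_eq_2)
  ultimately show ?thesis using t(2) by (simp add: fact_numeral algebra_simps)
qed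

lemma X_sub_meas: "i \<in> J \<Longrightarrow> X i \<in> borel_measurable (subM M X J)"
proof (rule measurableI)
  fix A :: "real set" assume "i \<in> J" "A \<in> sets borel"
  then show "X i -` A \<inter> space (subM M X J) \<in> sets (subM M X J)"
    unfolding space_subM sets_subM gen_sigma_def by (intro sigma_sets.Basic) blast
qed auto

lemma ind_sub_meas: "i \<in> J \<Longrightarrow> ind X y i \<in> borel_measurable (subM M X J)"
proof -
  assume "i \<in> J"
  have "ind X y i = (\<lambda>\<omega>. indicator {..y} (X i \<omega>))" by (auto simp: ind_def indicator_def fun_eq_iff)
  then show ?thesis using measurable_compose[OF X_sub_meas[OF \<open>i \<in> J\<close>] borel_measurable_indicator[of "{..y}"]]
    by simp
qed

lemma Sm_sub_meas: "I \<subseteq> J \<Longrightarrow> Sm X y q I \<in> borel_measurable (subM M X J)"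
  unfolding Sm_def by (intro borel_measurable_sum borel_measurable_diff ind_sub_meas) auto

lemma Sm_range: assumes "finite I"
  shows "Sm X y q I ` A \<subseteq> (\<lambda>k. real k - real (card I) * q) ` {..card I}"
proof
  fix z assume "z \<in> Sm X y q I ` A"
  then obtain \<omega> where z: "z = Sm X y q I \<omega>" by auto
  have "Sm X y q I \<omega> = (\<Sum>i\<in>I. ind X y i \<omega>) - real (card I) * q"
    unfolding Sm_def by (simp add: sum_subtractf)
  also have "(\<Sum>i\<in>I. ind X y i \<omega>) = real (card {i\<in>I. X i \<omega> \<le> y})"
    unfolding ind_def using sum.inter_filter[OF assms, of "\<lambda>_. (1::real)" "\<lambda>i. X i \<omega> \<le> y"] by simp
  finally have "z = real (card {i\<in>I. X i \<omega> \<le> y}) - real (card I) * q" using z by simp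
  moreover have "card {i\<in>I. X i \<omega> \<le> y} \<le> card I" using assms by (intro card_mono) auto
  ultimately show "z \<in> (\<lambda>k. real k - real (card I) * q) ` {..card I}" by auto
qed

lemma Sm_fin: "finite I \<Longrightarrow> finite (Sm X y q I ` A)"
  by (rule finite_subset[OF Sm_range]) auto

lemma Sm_bound: assumes "0 \<le> q" "q \<le> 1" shows "\<bar>Sm X y q I \<omega>\<bar> \<le> real (card I)"
proof -
  have "\<bar>Sm X y q I \<omega>\<bar> \<le> (\<Sum>i\<in>I. \<bar>ind X y i \<omega> - q\<bar>)" unfolding Sm_def by (rule sum_abs)
  also have "\<dots> \<le> (\<Sum>i\<in>I. 1)" by (intro sum_mono) (use assms in \<open>auto simp: ind_def\<close>)
  finally show ?thesis by simp
qed

context mixing begin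

context fixes y q assumes margq: "\<And>i. i \<ge> 1 \<Longrightarrow> prob {\<omega>\<in>space M. X i \<omega> \<le> y} = q"
begin

lemma q01: "0 \<le> q" "q \<le> 1" using margq[of 1] by auto

lemma ind_M[measurable]: "i \<ge> 1 \<Longrightarrow> ind X y i \<in> borel_measurable M"
  by (rule sub_meas[of "{i}"]) (auto intro: ind_sub_meas)

lemma Sm_M[measurable]: "I \<subseteq> {1..} \<Longrightarrow> Sm X y q I \<in> borel_measurable M"
  by (rule sub_meas[OF _ Sm_sub_meas[OF order.refl]])

lemma ind_int: "i \<ge> 1 \<Longrightarrow> integrable M (ind X y i)"
  by (rule integrable_const_bound[where B=1]) (auto simp: ind_def)

lemma E_ind: "i \<ge> 1 \<Longrightarrow> expectation (ind X y i) = q"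
proof -
  assume i: "i \<ge> 1"
  have [measurable]: "X i \<in> borel_measurable M" using rv i by auto
  have "expectation (ind X y i) = expectation (indicator {\<omega>\<in>space M. X i \<omega> \<le> y})"
    by (rule Bochner_Integration.integral_cong[OF refl]) (auto simp: ind_def)
  also have "\<dots> = q" using margq[OF i] by simp
  finally show ?thesis .
qed


lemma ind_fin: "finite (ind X y i ` A)"
  by (rule finite_subset[of _ "{0,1}"]) (auto simp: ind_def)

lemma ind01: "0 \<le> ind X y i \<omega> \<and> ind X y i \<omega> \<le> 1" by (auto simp: ind_def)

lemma ind_sq: "ind X y i \<omega> * ind X y i \<omega> = ind X y i \<omega>" by (auto simp: ind_def)

lemma int_bdd: fixes f :: "'a \<Rightarrow> real" shows "f \<in> borel_measurable M \<Longrightarrow> (\<And>x. x \<in> space M \<Longrightarrow> \<bar>f x\<bar> \<le> (B::real)) \<Longrightarrow> integrable M f"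
  by (rule integrable_const_bound[where B=B]) auto

lemma E_cc: assumes "i \<ge> 1" "j \<ge> 1"
  shows "expectation (\<lambda>\<omega>. (ind X y i \<omega> - q) * (ind X y j \<omega> - q)) = expectation (\<lambda>\<omega>. ind X y i \<omega> * ind X y j \<omega>) - q\<^sup>2"
proof -
  have [measurable]: "ind X y i \<in> borel_measurable M" "ind X y j \<in> borel_measurable M" using assms by auto
  have ii: "integrable M (ind X y i)" "integrable M (ind X y j)" using ind_int assms by auto
  have ij: "integrable M (\<lambda>\<omega>. ind X y i \<omega> * ind X y j \<omega>)"
    by (rule int_bdd[where B=1]) (measurable, auto simp: ind_def)
  have "expectation (\<lambda>\<omega>. (ind X y i \<omega> - q) * (ind X y j \<omega> - q))
      = expectation (\<lambda>\<omega>. (ind X y i \<omega> * ind X y j \<omega> - q * ind X y i \<omega>) - (q * ind X y j \<omega> - q\<^sup>2))"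
    by (rule Bochner_Integration.integral_cong[OF refl]) (simp add: algebra_simps power2_eq_square)
  also have "\<dots> = (expectation (\<lambda>\<omega>. ind X y i \<omega> * ind X y j \<omega>) - q * expectation (ind X y i)) - (q * expectation (ind X y j) - q\<^sup>2)"
    using ii ij by (simp add: Bochner_Integration.integral_diff prob_space)
  also have "\<dots> = expectation (\<lambda>\<omega>. ind X y i \<omega> * ind X y j \<omega>) - q\<^sup>2"
    using E_ind assms by (simp add: power2_eq_square)
  finally show ?thesis .
qed

lemma cov_off: assumes "1 \<le> i" "i < j"
  shows "expectation (\<lambda>\<omega>. (ind X y i \<omega> - q) * (ind X y j \<omega> - q)) \<le> \<phi> (j - i)"
proof -
  have "expectation (\<lambda>\<omega>. ind X y i \<omega> * ind X y j \<omega>) \<le> expectation (ind X y i) * (expectation (ind X y j) + \<phi> (j - i) * 1)"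
  proof (rule prod_ineq[OF assms(1)])
    show "ind X y i \<in> borel_measurable (subM M X {1..i})" by (rule ind_sub_meas) (use assms in auto)
    show "ind X y j \<in> borel_measurable (subM M X {i + (j - i)..})" by (rule ind_sub_meas) (use assms in auto)
  qed (auto simp: ind_fin ind01)
  also have "\<dots> = q * (q + \<phi> (j - i))" using E_ind assms by simp
  finally have "expectation (\<lambda>\<omega>. ind X y i \<omega> * ind X y j \<omega>) - q\<^sup>2 \<le> q * \<phi> (j - i)"
    by (simp add: algebra_simps power2_eq_square)
  also have "\<dots> \<le> \<phi> (j - i)" using q01 phi_ge0[of "j - i"] by (simp add: mult_left_le_one_le)
  finally show ?thesis using E_cc assms by simp
qed

definition w :: "nat \<Rightarrow> nat \<Rightarrow> real" where
  "w i j = (if i = j then 1 else \<phi> (if i < j then j - i else i - j))"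

lemma cov_w: assumes "1 \<le> i" "1 \<le> j"
  shows "expectation (\<lambda>\<omega>. (ind X y i \<omega> - q) * (ind X y j \<omega> - q)) \<le> w i j"
proof (cases i j rule: linorder_cases)
  case less then show ?thesis using cov_off[OF assms(1) less] by (simp add: w_def)
next
  case greater
  have "expectation (\<lambda>\<omega>. (ind X y i \<omega> - q) * (ind X y j \<omega> - q)) = expectation (\<lambda>\<omega>. (ind X y j \<omega> - q) * (ind X y i \<omega> - q))"
    by (simp add: mult.commute)
  then show ?thesis using cov_off[OF assms(2) greater] greater by (simp add: w_def)
next
  case equal
  have "expectation (\<lambda>\<omega>. (ind X y i \<omega> - q) * (ind X y j \<omega> - q)) = q - q\<^sup>2"
    using E_cc[OF assms] equal E_ind assms by (simp add: ind_sq)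
  also have "\<dots> \<le> 1" using q01 by (simp add: power2_eq_square) (smt (verit) mult_nonneg_nonneg)
  finally show ?thesis using equal by (simp add: w_def)
qed

lemma second_moment: assumes "finite I" "I \<subseteq> {1..}"
  shows "expectation (\<lambda>\<omega>. (Sm X y q I \<omega>)\<^sup>2) = (\<Sum>i\<in>I. \<Sum>j\<in>I. expectation (\<lambda>\<omega>. (ind X y i \<omega> - q) * (ind X y j \<omega> - q)))"
proof -
  have intg: "integrable M (\<lambda>\<omega>. (ind X y i \<omega> - q) * (ind X y j \<omega> - q))" if "i \<in> I" "j \<in> I" for i j
  proof (rule int_bdd[where B=1])
    have [measurable]: "ind X y i \<in> borel_measurable M" "ind X y j \<in> borel_measurable M" using that assms by auto
    show "(\<lambda>\<omega>. (ind X y i \<omega> - q) * (ind X y j \<omega> - q)) \<in> borel_measurable M" by measurable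
    fix \<omega> show "\<bar>(ind X y i \<omega> - q) * (ind X y j \<omega> - q)\<bar> \<le> 1"
      using q01 by (auto simp: ind_def abs_mult intro!: mult_le_one)
  qed
  have "expectation (\<lambda>\<omega>. (Sm X y q I \<omega>)\<^sup>2) = expectation (\<lambda>\<omega>. \<Sum>i\<in>I. \<Sum>j\<in>I. (ind X y i \<omega> - q) * (ind X y j \<omega> - q))"
    unfolding Sm_def power2_eq_square sum_product by simp
  also have "\<dots> = (\<Sum>i\<in>I. expectation (\<lambda>\<omega>. \<Sum>j\<in>I. (ind X y i \<omega> - q) * (ind X y j \<omega> - q)))"
    by (rule Bochner_Integration.integral_sum) (auto intro!: intg)
  also have "\<dots> = (\<Sum>i\<in>I. \<Sum>j\<in>I. expectation (\<lambda>\<omega>. (ind X y i \<omega> - q) * (ind X y j \<omega> - q)))"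
    by (intro sum.cong refl Bochner_Integration.integral_sum) (auto intro!: intg)
  finally show ?thesis .
qed

lemma row_sum: assumes "a < i" "i \<le> b" "b \<le> a + L"
  shows "(\<Sum>j\<in>{a<..b}. w i j) \<le> 1 + 2 * (\<Sum>m\<in>{1..L}. \<phi> m)"
proof -
  have split: "{a<..b} = {a<..<i} \<union> ({i} \<union> {i<..b})" using assms by auto
  have "(\<Sum>j\<in>{a<..b}. w i j) = (\<Sum>j\<in>{a<..<i}. w i j) + (w i i + (\<Sum>j\<in>{i<..b}. w i j))"
    unfolding split by (subst sum.union_disjoint, simp, simp, force)+ simp
  also have "(\<Sum>j\<in>{a<..<i}. w i j) = (\<Sum>j\<in>{a<..<i}. \<phi> (i - j))"
    by (intro sum.cong refl) (auto simp: w_def)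
  also have "\<dots> = (\<Sum>m\<in>{1..i-a-1}. \<phi> (i - (i - m)))"
  proof -
    have "bij_betw (\<lambda>m. i - m) {1..i-a-1} {a<..<i}"
      by (rule bij_betwI[where g="\<lambda>j. i - j"]) auto
    then show ?thesis by (rule sum.reindex_bij_betw[symmetric])
  qed
  also have "\<dots> = (\<Sum>m\<in>{1..i-a-1}. \<phi> m)" by (intro sum.cong refl) auto
  also have "\<dots> \<le> (\<Sum>m\<in>{1..L}. \<phi> m)" by (intro sum_mono2) (use assms phi_ge0 in auto)
  also have "(\<Sum>j\<in>{i<..b}. w i j) = (\<Sum>j\<in>{i<..b}. \<phi> (j - i))"
    by (intro sum.cong refl) (auto simp: w_def)
  also have "\<dots> = (\<Sum>m\<in>{1..b-i}. \<phi> (i + m - i))"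
  proof -
    have "bij_betw (\<lambda>m. i + m) {1..b-i} {i<..b}"
      by (rule bij_betwI[where g="\<lambda>j. j - i"]) auto
    then show ?thesis by (rule sum.reindex_bij_betw[symmetric])
  qed
  also have "\<dots> = (\<Sum>m\<in>{1..b-i}. \<phi> m)" by (intro sum.cong refl) auto
  also have "\<dots> \<le> (\<Sum>m\<in>{1..L}. \<phi> m)" by (intro sum_mono2) (use assms phi_ge0 in auto)
  finally show ?thesis by (simp add: w_def)
qed

lemma block_var: assumes "b \<le> a + L"
  shows "expectation (\<lambda>\<omega>. (Sm X y q {a<..b} \<omega>)\<^sup>2) \<le> real (card {a<..b}) * (1 + 2 * (\<Sum>m\<in>{1..L}. \<phi> m))"
proof -
  have "expectation (\<lambda>\<omega>. (Sm X y q {a<..b} \<omega>)\<^sup>2) = (\<Sum>i\<in>{a<..b}. \<Sum>j\<in>{a<..b}. expectation (\<lambda>\<omega>. (ind X y i \<omega> - q) * (ind X y j \<omega> - q)))"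
    by (rule second_moment) auto
  also have "\<dots> \<le> (\<Sum>i\<in>{a<..b}. \<Sum>j\<in>{a<..b}. w i j)"
    by (intro sum_mono cov_w) auto
  also have "\<dots> \<le> (\<Sum>i\<in>{a<..b}. 1 + 2 * (\<Sum>m\<in>{1..L}. \<phi> m))"
    by (intro sum_mono row_sum) (use assms in auto)
  finally show ?thesis by simp
qed

lemma block_mgf: assumes "b \<le> a + L" "\<bar>\<mu>\<bar> * real L \<le> h"
  shows "expectation (\<lambda>\<omega>. exp (\<mu> * Sm X y q {a<..b} \<omega>)) \<le> 1 + \<mu>\<^sup>2 * real (card {a<..b}) * (1 + 2 * (\<Sum>m\<in>{1..L}. \<phi> m)) * exp h / 2"
proof -
  let ?Z = "Sm X y q {a<..b}"
  have ZM[measurable]: "?Z \<in> borel_measurable M" by (rule Sm_M) auto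
  have cardL: "real (card {a<..b}) \<le> real L" using assms by simp
  have Zb: "\<bar>?Z \<omega>\<bar> \<le> real L" for \<omega> using Sm_bound[OF q01, of X y "{a<..b}" \<omega>] cardL by linarith
  have muZ: "\<bar>\<mu> * ?Z \<omega>\<bar> \<le> h" for \<omega>
  proof -
    have "\<bar>\<mu> * ?Z \<omega>\<bar> = \<bar>\<mu>\<bar> * \<bar>?Z \<omega>\<bar>" by (simp add: abs_mult)
    also have "\<dots> \<le> \<bar>\<mu>\<bar> * real L" by (intro mult_left_mono Zb) auto
    finally show ?thesis using assms(2) by linarith
  qed
  have pt: "exp (\<mu> * ?Z \<omega>) \<le> 1 + \<mu> * ?Z \<omega> + \<mu>\<^sup>2 * (exp h / 2) * (?Z \<omega>)\<^sup>2" for \<omega>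
  proof -
    have "exp (\<mu> * ?Z \<omega>) \<le> 1 + \<mu> * ?Z \<omega> + (\<mu> * ?Z \<omega>)\<^sup>2 * exp \<bar>\<mu> * ?Z \<omega>\<bar> / 2" by (rule exp_quad)
    also have "(\<mu> * ?Z \<omega>)\<^sup>2 * exp \<bar>\<mu> * ?Z \<omega>\<bar> / 2 \<le> (\<mu> * ?Z \<omega>)\<^sup>2 * exp h / 2"
      using muZ[of \<omega>] by (intro divide_right_mono mult_left_mono) auto
    finally show ?thesis by (simp add: power_mult_distrib algebra_simps)
  qed
  have i1: "integrable M (\<lambda>\<omega>. exp (\<mu> * ?Z \<omega>))"
  proof (rule int_bdd[where B="exp h"])
    show "(\<lambda>\<omega>. exp (\<mu> * ?Z \<omega>)) \<in> borel_measurable M" by measurable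
    fix \<omega> have "\<mu> * ?Z \<omega> \<le> h" using muZ[of \<omega>] by (simp add: abs_le_iff)
    then show "\<bar>exp (\<mu> * ?Z \<omega>)\<bar> \<le> exp h" by simp
  qed
  have i2: "integrable M (\<lambda>\<omega>. (?Z \<omega>)\<^sup>2)"
  proof (rule int_bdd[where B="real L ^ 2"])
    show "(\<lambda>\<omega>. (?Z \<omega>)\<^sup>2) \<in> borel_measurable M" by measurable
    fix \<omega> have "\<bar>?Z \<omega>\<bar> ^ 2 \<le> real L ^ 2" by (intro power_mono Zb) auto
    then show "\<bar>(?Z \<omega>)\<^sup>2\<bar> \<le> real L ^ 2" by simp
  qed
  have i3: "integrable M ?Z"
    by (rule int_bdd[where B="real L"]) (measurable, auto simp: Zb)
  have EZ: "expectation ?Z = 0"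
  proof -
    have "expectation ?Z = (\<Sum>i\<in>{a<..b}. expectation (\<lambda>\<omega>. ind X y i \<omega> - q))"
      unfolding Sm_def by (rule Bochner_Integration.integral_sum) (auto intro!: ind_int)
    also have "\<dots> = 0" by (intro sum.neutral) (auto simp: Bochner_Integration.integral_diff ind_int E_ind prob_space)
    finally show ?thesis .
  qed
  have "expectation (\<lambda>\<omega>. exp (\<mu> * ?Z \<omega>)) \<le> expectation (\<lambda>\<omega>. 1 + \<mu> * ?Z \<omega> + \<mu>\<^sup>2 * (exp h / 2) * (?Z \<omega>)\<^sup>2)"
  proof (rule integral_mono[OF i1 _ pt])
    show "integrable M (\<lambda>\<omega>. 1 + \<mu> * ?Z \<omega> + \<mu>\<^sup>2 * (exp h / 2) * (?Z \<omega>)\<^sup>2)"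
      using i2 i3 by (intro Bochner_Integration.integrable_add integrable_mult_right) auto
  qed
  also have "\<dots> = 1 + \<mu> * expectation ?Z + \<mu>\<^sup>2 * (exp h / 2) * expectation (\<lambda>\<omega>. (?Z \<omega>)\<^sup>2)"
    using i2 i3 by (simp add: Bochner_Integration.integral_add prob_space)
  also have "\<dots> \<le> 1 + \<mu>\<^sup>2 * (exp h / 2) * (real (card {a<..b}) * (1 + 2 * (\<Sum>m\<in>{1..L}. \<phi> m)))"
  proof -
    have "\<mu>\<^sup>2 * (exp h / 2) * expectation (\<lambda>\<omega>. (?Z \<omega>)\<^sup>2) \<le> \<mu>\<^sup>2 * (exp h / 2) * (real (card {a<..b}) * (1 + 2 * (\<Sum>m\<in>{1..L}. \<phi> m)))"
      by (rule mult_left_mono[OF block_var[OF assms(1)]]) simp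
    then show ?thesis unfolding EZ by simp
  qed
  finally show ?thesis by (simp add: field_simps)
qed

end
end


definition Ir :: "nat \<Rightarrow> nat \<Rightarrow> nat \<Rightarrow> nat \<Rightarrow> nat set" where
  "Ir n L r m = {i\<in>{1..n}. i \<le> m * L \<and> ((i - 1) div L) mod 2 = r}"

definition Blk :: "nat \<Rightarrow> nat \<Rightarrow> nat \<Rightarrow> nat set" where
  "Blk n L m = {m * L<..min n (Suc m * L)}"

lemma Ir_0: "Ir n L r 0 = {}" by (auto simp: Ir_def)

lemma Ir_fin: "finite (Ir n L r m)" by (auto simp: Ir_def)

lemma Ir_step: assumes "L \<ge> 1"
  shows "Ir n L r (Suc m) = Ir n L r m \<union> (if m mod 2 = r then Blk n L m else {})"
    and "Ir n L r m \<inter> Blk n L m = {}"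
proof -
  have key: "(i - 1) div L = m" if "m * L < i" "i \<le> Suc m * L" for i
  proof -
    have "m * L \<le> i - 1" "i - 1 < Suc m * L" using that by auto
    then show ?thesis using assms
      by (metis div_less_iff_less_mult div_le_mono div_mult_self1_is_m le_antisym less_Suc_eq_le mult.commute not_one_le_zero zero_less_iff_neq_zero)
  qed
  show "Ir n L r (Suc m) = Ir n L r m \<union> (if m mod 2 = r then Blk n L m else {})"
  proof (intro set_eqI iffI)
    fix i assume i: "i \<in> Ir n L r (Suc m)"
    show "i \<in> Ir n L r m \<union> (if m mod 2 = r then Blk n L m else {})"
    proof (cases "i \<le> m * L")
      case True then show ?thesis using i by (auto simp: Ir_def)
    next
      case False
      then have "(i - 1) div L = m" using key i by (auto simp: Ir_def)
      then show ?thesis using i False by (auto simp: Ir_def Blk_def)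
    qed
  next
    fix i assume "i \<in> Ir n L r m \<union> (if m mod 2 = r then Blk n L m else {})"
    then show "i \<in> Ir n L r (Suc m)"
    proof
      assume "i \<in> Ir n L r m" then show ?thesis by (auto simp: Ir_def intro: order.trans)
    next
      assume i: "i \<in> (if m mod 2 = r then Blk n L m else {})"
      then have "m mod 2 = r" "m * L < i" "i \<le> min n (Suc m * L)" by (auto split: if_splits simp: Blk_def)
      moreover then have "(i - 1) div L = m" using key by auto
      ultimately show ?thesis by (auto simp: Ir_def)
    qed
  qed
  show "Ir n L r m \<inter> Blk n L m = {}" by (auto simp: Ir_def Blk_def)
qed

lemma Ir_sub: assumes "L \<ge> 1" "m mod 2 = r" "1 \<le> m"
  shows "Ir n L r m \<subseteq> {1..(m - 1) * L}"
proof
  fix i assume i: "i \<in> Ir n L r m"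
  then have i1: "1 \<le> i" "i \<le> m * L" "((i - 1) div L) mod 2 = r" by (auto simp: Ir_def)
  have "(i - 1) div L < m" using i1 assms(1)
    by (metis One_nat_def Suc_le_eq Suc_pred div_less_iff_less_mult le_less_trans less_Suc_eq_le mult.commute not_le zero_less_iff_neq_zero)
  moreover have "(i - 1) div L \<noteq> m - 1"
  proof
    assume "(i - 1) div L = m - 1"
    then have "(m - 1) mod 2 = m mod 2" using i1(3) assms(2) by metis
    then show False using assms(3) by (cases m) (simp_all, presburger)
  qed
  ultimately have "(i - 1) div L < m - 1" by linarith
  then have "i - 1 < (m - 1) * L" using assms(1) by (simp add: div_less_iff_less_mult)
  then show "i \<in> {1..(m - 1) * L}" using i1 by auto
qed

lemma Ir_full: assumes "L \<ge> 1" shows "Ir n L r n = {i\<in>{1..n}. ((i - 1) div L) mod 2 = r}"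
proof -
  have "i \<le> n * L" if "i \<le> n" for i using that assms by (metis le_trans mult_le_mono2 mult_1_right)
  then show ?thesis by (auto simp: Ir_def)
qed

lemma card_blocks: assumes "L \<ge> 1"
  shows "real (card {j. j < m \<and> j * L < n}) \<le> real n / real L + 1"
proof -
  have "{j. j < m \<and> j * L < n} \<subseteq> {..(n - 1) div L}"
  proof
    fix j assume "j \<in> {j. j < m \<and> j * L < n}"
    then have "j * L \<le> n - 1" by auto
    then have "(j * L) div L \<le> (n - 1) div L" by (rule div_le_mono)
    then show "j \<in> {..(n - 1) div L}" using assms by simp
  qed
  then have "card {j. j < m \<and> j * L < n} \<le> Suc ((n - 1) div L)"
    using card_mono[of "{..(n - 1) div L}"] by fastforce
  moreover have "real ((n - 1) div L) \<le> real n / real L"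
  proof -
    have "real ((n - 1) div L) * real L \<le> real n"
      by (metis div_times_less_eq_dividend of_nat_le_iff of_nat_mult diff_le_self le_trans)
    then show ?thesis using assms by (simp add: pos_le_divide_eq)
  qed
  ultimately show ?thesis by linarith
qed


lemma Sm_union: "finite A \<Longrightarrow> finite B \<Longrightarrow> A \<inter> B = {} \<Longrightarrow> Sm X y q (A \<union> B) \<omega> = Sm X y q A \<omega> + Sm X y q B \<omega>"
  unfolding Sm_def by (rule sum.union_disjoint)

lemma Sm_empty: "Sm X y q {} \<omega> = 0" by (simp add: Sm_def)

context mixing begin

context fixes y q assumes margq: "\<And>i. i \<ge> 1 \<Longrightarrow> prob {\<omega>\<in>space M. X i \<omega> \<le> y} = q"
begin

lemma iter:
  assumes L: "L \<ge> 1" and mu: "\<bar>\<mu>\<bar> * real L \<le> h"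
  shows "expectation (\<lambda>\<omega>. exp (\<mu> * Sm X y q (Ir n L r m) \<omega>))
    \<le> exp (\<mu>\<^sup>2 * real (min n (m * L)) * (1 + 2 * (\<Sum>k\<in>{1..L}. \<phi> k)) * exp h / 2
           + \<phi> L * exp h * real (card {j. j < m \<and> j * L < n}))"
proof (induction m)
  case 0
  show ?case by (simp add: Ir_0 Sm_empty prob_space)
next
  case (Suc m)
  define v where "v = 1 + 2 * (\<Sum>k\<in>{1..L}. \<phi> k)"
  have v0: "0 \<le> v" unfolding v_def using phi_ge0 by (simp add: sum_nonneg)
  have h0: "0 \<le> h" using mu by (smt (verit) mult_nonneg_nonneg abs_ge_zero of_nat_0_le_iff)
  define P where "P = \<mu>\<^sup>2 * real (min n (m * L)) * v * exp h / 2 + \<phi> L * exp h * real (card {j. j < m \<and> j * L < n})"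
  define P' where "P' = \<mu>\<^sup>2 * real (min n (Suc m * L)) * v * exp h / 2 + \<phi> L * exp h * real (card {j. j < Suc m \<and> j * L < n})"
  have IH: "expectation (\<lambda>\<omega>. exp (\<mu> * Sm X y q (Ir n L r m) \<omega>)) \<le> exp P" using Suc.IH unfolding P_def v_def .
  have cardB: "card (Blk n L m) \<le> L" unfolding Blk_def by simp
  have blkset: "{j. j < Suc m \<and> j * L < n} = {j. j < m \<and> j * L < n} \<union> (if m * L < n then {m} else {})" by (auto simp: less_Suc_eq)
  have cnt: "card {j. j < Suc m \<and> j * L < n} = card {j. j < m \<and> j * L < n} + (if m * L < n then 1 else 0)"
    unfolding blkset by (auto simp: card_insert_if)
  have minle: "real (min n (m * L)) + real (card (Blk n L m)) \<le> real (min n (Suc m * L))"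
    unfolding Blk_def by auto
  have PP': "P \<le> P'"
  proof -
    have "real (min n (m * L)) \<le> real (min n (Suc m * L))" by simp
    then have "\<mu>\<^sup>2 * real (min n (m * L)) * v * exp h / 2 \<le> \<mu>\<^sup>2 * real (min n (Suc m * L)) * v * exp h / 2"
      using v0 by (intro divide_right_mono mult_right_mono mult_left_mono) auto
    moreover have "\<phi> L * exp h * real (card {j. j < m \<and> j * L < n}) \<le> \<phi> L * exp h * real (card {j. j < Suc m \<and> j * L < n})"
      using phi_ge0[of L] unfolding cnt by (intro mult_left_mono) auto
    ultimately show ?thesis unfolding P_def P'_def by linarith
  qed
  have decomp: "Sm X y q (Ir n L r (Suc m)) \<omega> = Sm X y q (Ir n L r m) \<omega> + (if m mod 2 = r then Sm X y q (Blk n L m) \<omega> else 0)" for \<omega>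
    unfolding Ir_step(1)[OF L] using Ir_step(2)[OF L, of n r m]
    by (auto simp: Sm_union Ir_fin Blk_def Sm_empty)
  show ?case
  proof (cases "m mod 2 = r \<and> m * L < n")
    case False
    have "Sm X y q (Ir n L r (Suc m)) \<omega> = Sm X y q (Ir n L r m) \<omega>" for \<omega>
    proof (cases "m mod 2 = r")
      case True
      then have "Blk n L m = {}" using False by (auto simp: Blk_def)
      then show ?thesis using decomp[of \<omega>] by (simp add: Sm_empty)
    qed (use decomp in simp)
    then have "expectation (\<lambda>\<omega>. exp (\<mu> * Sm X y q (Ir n L r (Suc m)) \<omega>)) \<le> exp P" using IH by simp
    also have "\<dots> \<le> exp P'" using PP' by simp
    finally show ?thesis unfolding P'_def v_def .
  next
    case True
    let ?Z = "Sm X y q (Blk n L m)"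
    have Zb: "\<bar>\<mu> * ?Z \<omega>\<bar> \<le> h" for \<omega>
    proof -
      have "\<bar>\<mu> * ?Z \<omega>\<bar> = \<bar>\<mu>\<bar> * \<bar>?Z \<omega>\<bar>" by (simp add: abs_mult)
      also have "\<dots> \<le> \<bar>\<mu>\<bar> * real L"
        using Sm_bound[OF q01[OF margq], of X y "Blk n L m" \<omega>] cardB
        by (intro mult_left_mono) auto
      finally show ?thesis using mu by linarith
    qed
    have mgf: "expectation (\<lambda>\<omega>. exp (\<mu> * ?Z \<omega>)) \<le> 1 + \<mu>\<^sup>2 * real (card (Blk n L m)) * v * exp h / 2"
      unfolding Blk_def v_def by (rule block_mgf[OF margq _ mu]) (auto intro: min.coboundedI2)
    define \<Delta> where "\<Delta> = \<mu>\<^sup>2 * real (card (Blk n L m)) * v * exp h / 2 + \<phi> L * exp h"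
    have PD: "P + \<Delta> \<le> P'"
    proof -
      have "\<mu>\<^sup>2 * real (min n (m * L)) * v * exp h / 2 + \<mu>\<^sup>2 * real (card (Blk n L m)) * v * exp h / 2
          = \<mu>\<^sup>2 * (real (min n (m * L)) + real (card (Blk n L m))) * v * exp h / 2" by (simp add: algebra_simps)
      also have "\<dots> \<le> \<mu>\<^sup>2 * real (min n (Suc m * L)) * v * exp h / 2"
        using minle v0 by (intro divide_right_mono mult_right_mono mult_left_mono) auto
      finally show ?thesis unfolding P_def P'_def \<Delta>_def cnt using True by (simp add: algebra_simps)
    qed
    have d1: "1 + \<mu>\<^sup>2 * real (card (Blk n L m)) * v * exp h / 2 + \<phi> L * exp h \<le> exp \<Delta>"
      unfolding \<Delta>_def by (rule order.trans[OF _ exp_ge_add_one_self]) simp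
    have eqW: "exp (\<mu> * Sm X y q (Ir n L r (Suc m)) \<omega>) = exp (\<mu> * Sm X y q (Ir n L r m) \<omega>) * exp (\<mu> * ?Z \<omega>)" for \<omega>
      using decomp[of \<omega>] True by (simp add: distrib_left exp_add)
    show ?thesis
    proof (cases "m = 0")
      case m0: True
      have "expectation (\<lambda>\<omega>. exp (\<mu> * Sm X y q (Ir n L r (Suc m)) \<omega>)) = expectation (\<lambda>\<omega>. exp (\<mu> * ?Z \<omega>))"
      proof -
        have "Sm X y q (Ir n L r (Suc m)) \<omega> = ?Z \<omega>" for \<omega> using decomp[of \<omega>] True m0 by (simp add: Ir_0 Sm_empty)
        then show ?thesis by simp
      qed
      also have "\<dots> \<le> exp \<Delta>" using mgf d1 phi_ge0[of L] by (smt (verit) exp_ge_zero mult_nonneg_nonneg)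
      also have "\<dots> \<le> exp P'" using PD m0 by (simp add: P_def)
      finally show ?thesis unfolding P'_def v_def .
    next
      case m1: False
      define k where "k = max 1 ((m - 1) * L)"
      define g where "g = Suc (m * L) - k"
      have k1: "k \<ge> 1" unfolding k_def by simp
      have a1: "1 \<le> m * L" using m1 L by (cases m) auto
      have a2: "(m - 1) * L \<le> m * L" by simp
      have kle: "k \<le> m * L" unfolding k_def using a1 a2 by simp
      have kg: "k + g = Suc (m * L)" unfolding g_def using kle by simp
      have gL: "L \<le> g"
      proof (cases "(m - 1) * L \<ge> 1")
        case True
        then have "k = (m - 1) * L" unfolding k_def by simp
        moreover have "m * L = (m - 1) * L + L" using m1 by (cases m) auto
        ultimately show ?thesis unfolding g_def by simp
      next
        case False
        then have "(m - 1) * L = 0" by linarith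
        then have "k = 1" unfolding k_def by simp
        then show ?thesis unfolding g_def using m1 L by (cases m) auto
      qed
      have Isub: "Ir n L r m \<subseteq> {1..k}" using Ir_sub[OF L _ , of m r n] True m1 unfolding k_def by force
      have Bsub: "Blk n L m \<subseteq> {k + g..}" unfolding kg Blk_def by auto
      have [measurable]: "Sm X y q (Ir n L r m) \<in> borel_measurable (subM M X {1..k})" by (rule Sm_sub_meas[OF Isub])
      have [measurable]: "?Z \<in> borel_measurable (subM M X {k + g..})" by (rule Sm_sub_meas[OF Bsub])
      have UM: "(\<lambda>\<omega>. exp (\<mu> * Sm X y q (Ir n L r m) \<omega>)) \<in> borel_measurable (subM M X {1..k})" by measurable
      have VM: "(\<lambda>\<omega>. exp (\<mu> * ?Z \<omega>)) \<in> borel_measurable (subM M X {k + g..})" by measurable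
      have finU: "finite ((\<lambda>\<omega>. exp (\<mu> * Sm X y q (Ir n L r m) \<omega>)) ` space M)"
      proof -
        have "(\<lambda>\<omega>. exp (\<mu> * Sm X y q (Ir n L r m) \<omega>)) ` space M = (\<lambda>z. exp (\<mu> * z)) ` (Sm X y q (Ir n L r m) ` space M)"
          by auto
        then show ?thesis using Sm_fin[OF Ir_fin, of X y q n L r m "space M"] by simp
      qed
      have finV: "finite ((\<lambda>\<omega>. exp (\<mu> * ?Z \<omega>)) ` space M)"
      proof -
        have "(\<lambda>\<omega>. exp (\<mu> * ?Z \<omega>)) ` space M = (\<lambda>z. exp (\<mu> * z)) ` (?Z ` space M)" by auto
        moreover have "finite (?Z ` space M)" by (rule Sm_fin) (simp add: Blk_def)
        ultimately show ?thesis by simp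
      qed
      have Vb: "0 \<le> exp (\<mu> * ?Z \<omega>) \<and> exp (\<mu> * ?Z \<omega>) \<le> exp h" for \<omega>
        using Zb[of \<omega>] by (simp add: abs_le_iff)
      have EU0: "0 \<le> expectation (\<lambda>\<omega>. exp (\<mu> * Sm X y q (Ir n L r m) \<omega>))" by simp
      have "expectation (\<lambda>\<omega>. exp (\<mu> * Sm X y q (Ir n L r (Suc m)) \<omega>))
          = expectation (\<lambda>\<omega>. exp (\<mu> * Sm X y q (Ir n L r m) \<omega>) * exp (\<mu> * ?Z \<omega>))"
        using eqW by simp
      also have "\<dots> \<le> expectation (\<lambda>\<omega>. exp (\<mu> * Sm X y q (Ir n L r m) \<omega>)) * (expectation (\<lambda>\<omega>. exp (\<mu> * ?Z \<omega>)) + \<phi> g * exp h)"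
        by (rule prod_ineq[OF k1 UM finU _ VM finV Vb]) simp
      also have "\<dots> \<le> exp P * (1 + \<mu>\<^sup>2 * real (card (Blk n L m)) * v * exp h / 2 + \<phi> L * exp h)"
      proof (rule mult_mono[OF IH])
        have "\<phi> g * exp h \<le> \<phi> L * exp h" using phi_antimono[OF L gL] by simp
        then show "expectation (\<lambda>\<omega>. exp (\<mu> * ?Z \<omega>)) + \<phi> g * exp h \<le> 1 + \<mu>\<^sup>2 * real (card (Blk n L m)) * v * exp h / 2 + \<phi> L * exp h"
          using mgf by linarith
        show "0 \<le> expectation (\<lambda>\<omega>. exp (\<mu> * ?Z \<omega>)) + \<phi> g * exp h"
          using phi_ge0[of g] by (simp add: add_nonneg_nonneg)
      qed simp
      also have "\<dots> \<le> exp P * exp \<Delta>" using d1 by (intro mult_left_mono) auto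
      also have "\<dots> = exp (P + \<Delta>)" by (simp add: exp_add)
      also have "\<dots> \<le> exp P'" using PD by simp
      finally show ?thesis unfolding P'_def v_def .
    qed
  qed
qed

end
end



context mixing begin

context fixes y q assumes margq: "\<And>i. i \<ge> 1 \<Longrightarrow> prob {\<omega>\<in>space M. X i \<omega> \<le> y} = q"
begin

lemma one_side:
  assumes L: "L \<ge> 1" and lam: "0 < lam" "lam * real L \<le> h" and sg: "\<bar>\<sigma>\<bar> = 1"
    and Vc: "1 + 2 * (\<Sum>k\<in>{1..L}. \<phi> k) \<le> Vc" and Cp: "\<phi> L * (real n / real L + 1) \<le> Cp"
  shows "prob {\<omega>\<in>space M. \<sigma> * Sm X y q (Ir n L r n) \<omega> \<ge> t / 2}
    \<le> exp (lam\<^sup>2 * real n * Vc * exp h / 2 + exp h * Cp - lam * t / 2)"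
proof -
  let ?W = "Sm X y q (Ir n L r n)"
  have WM[measurable]: "?W \<in> borel_measurable M" by (rule Sm_M[OF margq]) (auto simp: Ir_def)
  have mu: "\<bar>\<sigma> * lam\<bar> * real L \<le> h" using sg lam by (simp add: abs_mult)
  have h0: "0 \<le> h" using lam by (smt (verit) mult_nonneg_nonneg of_nat_0_le_iff)
  have set_eq: "{\<omega>\<in>space M. \<sigma> * ?W \<omega> \<ge> t / 2} = {\<omega>\<in>space M. exp (\<sigma> * lam * ?W \<omega>) \<ge> exp (lam * t / 2)}"
  proof -
    have "\<sigma> * ?W \<omega> \<ge> t / 2 \<longleftrightarrow> exp (\<sigma> * lam * ?W \<omega>) \<ge> exp (lam * t / 2)" for \<omega>
    proof -
      have e1: "\<sigma> * lam * ?W \<omega> = lam * (\<sigma> * ?W \<omega>)" "lam * t / 2 = lam * (t / 2)" by simp_all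
      show ?thesis unfolding e1 exp_le_cancel_iff mult_le_cancel_left_pos[OF lam(1)] ..
    qed
    then show ?thesis by auto
  qed
  have intg: "integrable M (\<lambda>\<omega>. exp (\<sigma> * lam * ?W \<omega>))"
  proof (rule int_bdd[OF margq, where B="exp (lam * real (card (Ir n L r n)))"])
    have m2: "(\<lambda>\<omega>. \<sigma> * lam * ?W \<omega>) \<in> borel_measurable M"
      by (rule borel_measurable_times[OF borel_measurable_const WM])
    show "(\<lambda>\<omega>. exp (\<sigma> * lam * ?W \<omega>)) \<in> borel_measurable M"
      using measurable_compose[OF m2 borel_measurable_exp] by (simp add: o_def)
    fix \<omega>
    have "\<bar>?W \<omega>\<bar> \<le> real (card (Ir n L r n))" by (rule Sm_bound[OF q01[OF margq]])
    then have "\<bar>\<sigma> * lam * ?W \<omega>\<bar> \<le> lam * real (card (Ir n L r n))"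
      using sg lam by (simp add: abs_mult mult_left_mono)
    then show "\<bar>exp (\<sigma> * lam * ?W \<omega>)\<bar> \<le> exp (lam * real (card (Ir n L r n)))" by (simp add: abs_le_iff)
  qed
  have mk: "prob {\<omega>\<in>space M. \<sigma> * ?W \<omega> \<ge> t / 2} \<le> expectation (\<lambda>\<omega>. exp (\<sigma> * lam * ?W \<omega>)) / exp (lam * t / 2)"
    unfolding set_eq by (rule integral_Markov_inequality_measure[OF intg sets.top]) auto
  have "expectation (\<lambda>\<omega>. exp (\<sigma> * lam * ?W \<omega>))
      \<le> exp ((\<sigma> * lam)\<^sup>2 * real (min n (n * L)) * (1 + 2 * (\<Sum>k\<in>{1..L}. \<phi> k)) * exp h / 2
           + \<phi> L * exp h * real (card {j. j < n \<and> j * L < n}))"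
    by (rule iter[OF margq L mu])
  also have "\<dots> \<le> exp (lam\<^sup>2 * real n * Vc * exp h / 2 + exp h * Cp)"
  proof -
    have s2: "\<sigma>\<^sup>2 = 1" by (metis sg power2_abs power_one)
    have a: "(\<sigma> * lam)\<^sup>2 = lam\<^sup>2" by (simp add: power_mult_distrib s2)
    have v0: "0 \<le> 1 + 2 * (\<Sum>k\<in>{1..L}. \<phi> k)" using phi_ge0 by (simp add: sum_nonneg)
    have "lam\<^sup>2 * real (min n (n * L)) * (1 + 2 * (\<Sum>k\<in>{1..L}. \<phi> k)) * exp h / 2 \<le> lam\<^sup>2 * real n * Vc * exp h / 2"
      using Vc v0 by (intro divide_right_mono mult_right_mono mult_mono mult_left_mono) auto
    moreover have "\<phi> L * exp h * real (card {j. j < n \<and> j * L < n}) \<le> exp h * Cp"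
    proof -
      have "\<phi> L * real (card {j. j < n \<and> j * L < n}) \<le> \<phi> L * (real n / real L + 1)"
        using card_blocks[OF L] phi_ge0 by (intro mult_left_mono) auto
      then have "\<phi> L * real (card {j. j < n \<and> j * L < n}) \<le> Cp" using Cp by linarith
      then show ?thesis by (simp add: algebra_simps mult_left_mono)
    qed
    ultimately show ?thesis unfolding a exp_le_cancel_iff by linarith
  qed
  finally have "prob {\<omega>\<in>space M. \<sigma> * ?W \<omega> \<ge> t / 2} \<le> exp (lam\<^sup>2 * real n * Vc * exp h / 2 + exp h * Cp) / exp (lam * t / 2)"
    by (intro order.trans[OF mk] divide_right_mono) auto
  then show ?thesis by (simp add: exp_diff)
qed


lemma tail:
  assumes L: "L \<ge> 1" and lam: "0 < lam" "lam * real L \<le> h"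
    and Vc: "1 + 2 * (\<Sum>k\<in>{1..L}. \<phi> k) \<le> Vc" and Cp: "\<phi> L * (real n / real L + 1) \<le> Cp"
  shows "prob {\<omega>\<in>space M. \<bar>Sm X y q {1..n} \<omega>\<bar> > t}
    \<le> 4 * exp (lam\<^sup>2 * real n * Vc * exp h / 2 + exp h * Cp - lam * t / 2)"
proof -
  let ?B = "exp (lam\<^sup>2 * real n * Vc * exp h / 2 + exp h * Cp - lam * t / 2)"
  let ?W = "\<lambda>r. Sm X y q (Ir n L r n)"
  have WM[measurable]: "?W r \<in> borel_measurable M" for r by (rule Sm_M[OF margq]) (auto simp: Ir_def)
  have part: "{1..n} = Ir n L 0 n \<union> Ir n L 1 n" "Ir n L 0 n \<inter> Ir n L 1 n = {}"
    unfolding Ir_full[OF L] by auto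
  have sum: "Sm X y q {1..n} \<omega> = ?W 0 \<omega> + ?W 1 \<omega>" for \<omega>
    by (subst part(1)) (rule Sm_union[OF Ir_fin Ir_fin part(2)])
  define E where "E r \<sigma> = {\<omega>\<in>space M. \<sigma> * ?W r \<omega> \<ge> t / 2}" for r and \<sigma> :: real
  have EM[measurable]: "E r \<sigma> \<in> events" for r \<sigma> unfolding E_def by measurable
  have Eb: "prob (E r \<sigma>) \<le> ?B" if "\<bar>\<sigma>\<bar> = 1" for r \<sigma>
    unfolding E_def by (rule one_side[OF L lam that Vc Cp])
  have sub: "{\<omega>\<in>space M. \<bar>Sm X y q {1..n} \<omega>\<bar> > t} \<subseteq> (E 0 1 \<union> E 1 1) \<union> (E 0 (-1) \<union> E 1 (-1))"
    unfolding E_def sum by auto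
  have "prob {\<omega>\<in>space M. \<bar>Sm X y q {1..n} \<omega>\<bar> > t} \<le> prob ((E 0 1 \<union> E 1 1) \<union> (E 0 (-1) \<union> E 1 (-1)))"
    by (rule finite_measure_mono[OF sub]) simp
  also have "\<dots> \<le> prob (E 0 1 \<union> E 1 1) + prob (E 0 (-1) \<union> E 1 (-1))"
    by (rule measure_Un_le) simp_all
  also have "\<dots> \<le> (prob (E 0 1) + prob (E 1 1)) + (prob (E 0 (-1)) + prob (E 1 (-1)))"
    by (intro add_mono measure_Un_le) simp_all
  also have "\<dots> \<le> (?B + ?B) + (?B + ?B)" by (intro add_mono Eb) simp_all
  finally show ?thesis by simp
qed

end
end


lemma le_sqrt_self: "0 \<le> (x::real) \<Longrightarrow> x \<le> 1 \<Longrightarrow> x \<le> sqrt x"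
proof -
  assume a: "0 \<le> x" "x \<le> 1"
  then have "sqrt x \<le> 1" by simp
  then have "sqrt x * sqrt x \<le> sqrt x * 1" using a by (intro mult_left_mono) auto
  then show ?thesis using a by simp
qed

context mixing begin

context fixes S assumes summ: "summable (\<lambda>n. sqrt (\<phi> (Suc n)))" and S_def: "S = (\<Sum>n. sqrt (\<phi> (Suc n)))"
begin

lemma S_ge0: "0 \<le> S" unfolding S_def by (rule suminf_nonneg[OF summ]) (simp add: phi_ge0)

lemma partial_le_S: "(\<Sum>j<L. sqrt (\<phi> (Suc j))) \<le> S"
  unfolding S_def by (rule sum_le_suminf[OF summ]) (auto simp: phi_ge0)

lemma phi_sum_le: "(\<Sum>k\<in>{1..L}. \<phi> k) \<le> S"
proof -
  have "(\<Sum>k\<in>{1..L}. \<phi> k) = (\<Sum>j<L. \<phi> (Suc j))" by (simp add: sum.atLeast1_atMost_eq)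
  also have "\<dots> \<le> (\<Sum>j<L. sqrt (\<phi> (Suc j)))" by (intro sum_mono le_sqrt_self phi_ge0 phi_le1)
  also have "\<dots> \<le> S" by (rule partial_le_S)
  finally show ?thesis .
qed

lemma phi_L_le: assumes "L \<ge> 1" shows "\<phi> L \<le> S\<^sup>2 / (real L)\<^sup>2"
proof -
  have "(\<Sum>j<L. sqrt (\<phi> L)) \<le> (\<Sum>j<L. sqrt (\<phi> (Suc j)))"
    by (intro sum_mono real_sqrt_le_mono phi_antimono) (use assms in auto)
  then have "real L * sqrt (\<phi> L) \<le> S" using partial_le_S[of L] by simp
  then have "(real L * sqrt (\<phi> L))\<^sup>2 \<le> S\<^sup>2" by (intro power_mono) (auto simp: phi_ge0)
  then have "(real L)\<^sup>2 * \<phi> L \<le> S\<^sup>2" by (simp add: power_mult_distrib phi_ge0)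
  then show ?thesis using assms by (simp add: pos_le_divide_eq mult.commute)
qed

lemma Cp_bound: assumes "L \<ge> 1" "real n \<le> (real L)^3" shows "\<phi> L * (real n / real L + 1) \<le> 2 * S\<^sup>2"
proof -
  have L0: "real L \<ge> 1" using assms by simp
  have "\<phi> L * (real n / real L + 1) \<le> S\<^sup>2 / (real L)\<^sup>2 * (real n / real L + 1)"
    by (intro mult_right_mono phi_L_le assms) auto
  also have "\<dots> = S\<^sup>2 * (real n / (real L)^3) + S\<^sup>2 / (real L)\<^sup>2"
    using L0 by (simp add: field_simps power2_eq_square power3_eq_cube)
  also have "\<dots> \<le> S\<^sup>2 * 1 + S\<^sup>2 / 1"
  proof (intro add_mono mult_left_mono divide_left_mono)
    show "real n / (real L)^3 \<le> 1" using assms L0 by (simp add: divide_le_eq_1)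
    show "1 \<le> (real L)\<^sup>2" using L0 by (simp add: one_le_power)
  qed (use L0 in auto)
  finally show ?thesis by simp
qed

end
end

lemma grid_lemma:
  fixes Fn F :: "real \<Rightarrow> real"
  assumes mFn: "mono Fn" and mF: "mono F"
    and lip: "\<And>u v. lo \<le> u \<Longrightarrow> u \<le> v \<Longrightarrow> v \<le> hi \<Longrightarrow> F v - F u \<le> d * (v - u)"
    and s: "s > 0" and lo: "lo \<le> a" and hi: "a + real K * s \<le> hi" and b: "b \<le> a + real K * s"
    and gp: "\<And>j. j \<le> K \<Longrightarrow> \<bar>Fn (a + real j * s) - F (a + real j * s)\<bar> \<le> s"
    and d: "0 \<le> d"
    and x: "a \<le> x" "x \<le> b"
  shows "\<bar>Fn x - F x\<bar> \<le> (1 + d) * s"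
proof -
  define y where "y j = a + real j * s" for j
  define j0 where "j0 = nat \<lfloor>(x - a) / s\<rfloor>"
  define j where "j = min j0 K"
  have xa: "0 \<le> (x - a) / s" using x s by simp
  have j0le: "real j0 * s \<le> x - a"
  proof -
    have "real j0 = of_int \<lfloor>(x - a) / s\<rfloor>" unfolding j0_def using xa by simp
    also have "\<dots> \<le> (x - a) / s" by simp
    finally show ?thesis using s by (simp add: pos_le_divide_eq)
  qed
  have j0gt: "x - a < (real j0 + 1) * s"
  proof -
    have "real j0 = of_int \<lfloor>(x - a) / s\<rfloor>" unfolding j0_def using xa by simp
    then have "(x - a) / s < real j0 + 1" by linarith
    then show ?thesis using s by (simp add: pos_divide_less_eq)
  qed
  have yj: "y j \<le> x"
  proof -
    have "real j * s \<le> real j0 * s" unfolding j_def using s by (intro mult_right_mono) auto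
    then show ?thesis unfolding y_def using j0le by linarith
  qed
  have yK: "\<And>i. i \<le> K \<Longrightarrow> lo \<le> y i \<and> y i \<le> hi"
  proof -
    fix i assume "i \<le> K"
    then have "real i * s \<le> real K * s" using s by (intro mult_right_mono) auto
    moreover have "0 \<le> real i * s" using s by simp
    ultimately show "lo \<le> y i \<and> y i \<le> hi" unfolding y_def using lo hi by linarith
  qed
  have gpy: "\<And>i. i \<le> K \<Longrightarrow> \<bar>Fn (y i) - F (y i)\<bar> \<le> s" unfolding y_def by (rule gp)
  show ?thesis
  proof (cases "j = K")
    case True
    have "x = y K"
    proof -
      have "y K \<le> x" using yj True by simp
      moreover have "x \<le> y K" using x b unfolding y_def by simp
      ultimately show ?thesis by simp
    qed
    then have "\<bar>Fn x - F x\<bar> \<le> s" using gpy by simp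
    also have "\<dots> \<le> (1 + d) * s" using d s by simp
    finally show ?thesis .
  next
    case False
    then have jK: "j < K" and jj0: "j = j0" unfolding j_def by auto
    have xy1: "x \<le> y (Suc j)" using j0gt jj0 unfolding y_def by (simp add: algebra_simps)
    have step: "y (Suc j) - y j = s" unfolding y_def by (simp add: algebra_simps)
    have lipj: "F (y (Suc j)) - F (y j) \<le> d * s"
      using lip[of "y j" "y (Suc j)"] yK[of j] yK[of "Suc j"] jK step s by force
    have a1: "Fn x \<le> Fn (y (Suc j))" using mFn xy1 by (rule monoD)
    have a2: "F (y j) \<le> F x" using mF yj by (rule monoD)
    have a3: "Fn (y j) \<le> Fn x" using mFn yj by (rule monoD)
    have a4: "F x \<le> F (y (Suc j))" using mF xy1 by (rule monoD)
    have g1: "\<bar>Fn (y (Suc j)) - F (y (Suc j))\<bar> \<le> s" using gpy jK by simp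
    have g2: "\<bar>Fn (y j) - F (y j)\<bar> \<le> s" using gpy jK by simp
    have "Fn x - F x \<le> s + d * s" using a1 a2 g1 lipj by (simp add: abs_le_iff)
    moreover have "F x - Fn x \<le> s + d * s" using a3 a4 g2 lipj by (simp add: abs_le_iff)
    ultimately show ?thesis by (simp add: abs_le_iff algebra_simps)
  qed
qed



context mixing begin

context fixes S assumes summ: "summable (\<lambda>n. sqrt (\<phi> (Suc n)))" and S_def: "S = (\<Sum>n. sqrt (\<phi> (Suc n)))"
begin

lemma point_bound:
  fixes F :: "real \<Rightarrow> real"
  assumes margF: "\<And>i x. i \<ge> 1 \<Longrightarrow> prob {\<omega>\<in>space M. X i \<omega> \<le> x} = F x"
    and c: "c \<ge> 64 * (1 + 2 * S)" and n: "n \<ge> 2"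
    and s: "s = sqrt (c * ln (real n) / (4 * real n))"
    and sL: "s * (real n powr (1/3) + 1) \<le> 3/4"
  shows "prob {\<omega>\<in>space M. \<bar>Sm X y (F y) {1..n} \<omega>\<bar> > real n * s} \<le> 4 * exp (3 * S\<^sup>2) * real n powr (-4/3)"
proof -
  have S0: "0 \<le> S" by (rule S_ge0[OF summ S_def])
  define Vc where "Vc = 1 + 2 * S"
  have Vc1: "Vc \<ge> 1" unfolding Vc_def using S0 by simp
  have c0: "c > 0" using c S0 by (smt (verit) mult_nonneg_nonneg)
  have n0: "real n > 0" using n by simp
  have ln0: "ln (real n) > 0" using n by simp
  have s0: "s > 0" unfolding s using c0 n0 ln0 by simp
  have s2: "s\<^sup>2 * real n = c * ln (real n) / 4" unfolding s using c0 n0 ln0 by simp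
  define L where "L = nat \<lceil>real n powr (1/3)\<rceil>"
  have p0: "real n powr (1/3) > 0" using n0 by simp
  have L1: "L \<ge> 1" unfolding L_def using p0 by linarith
  have Lge: "real L \<ge> real n powr (1/3)" unfolding L_def by linarith
  have Lle: "real L \<le> real n powr (1/3) + 1" unfolding L_def using p0 by linarith
  have L3: "real n \<le> (real L)^3"
  proof -
    have "(real n powr (1/3))^3 = real n"
      using n0 by (simp add: powr_realpow[symmetric] powr_powr)
    moreover have "(real n powr (1/3))^3 \<le> (real L)^3" using Lge p0 by (intro power_mono) auto
    ultimately show ?thesis by simp
  qed
  define lam where "lam = s / (3 * Vc)"
  have lam0: "lam > 0" unfolding lam_def using s0 Vc1 by simp
  have lamL: "lam * real L \<le> 1/4"
  proof -
    have "lam * real L \<le> s / 3 * real L" unfolding lam_def using s0 Vc1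
      by (intro mult_right_mono) (auto simp: divide_simps)
    also have "\<dots> \<le> s / 3 * (real n powr (1/3) + 1)" using s0 Lle by (intro mult_left_mono) auto
    also have "\<dots> \<le> 1/4" using sL by simp
    finally show ?thesis .
  qed
  have Vcb: "1 + 2 * (\<Sum>k\<in>{1..L}. \<phi> k) \<le> Vc" unfolding Vc_def using phi_sum_le[OF summ S_def, of L] by simp
  have Cpb: "\<phi> L * (real n / real L + 1) \<le> 2 * S\<^sup>2" by (rule Cp_bound[OF summ S_def L1 L3])
  have margq: "\<And>i. i \<ge> 1 \<Longrightarrow> prob {\<omega>\<in>space M. X i \<omega> \<le> y} = F y" using margF by simp
  have T: "prob {\<omega>\<in>space M. \<bar>Sm X y (F y) {1..n} \<omega>\<bar> > real n * s}
    \<le> 4 * exp (lam\<^sup>2 * real n * Vc * exp (1/4) / 2 + exp (1/4) * (2 * S\<^sup>2) - lam * (real n * s) / 2)"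
    by (rule tail[OF margq L1 lam0 lamL Vcb Cpb])
  have e14: "exp (1/4::real) \<le> 3/2" using real_exp_bound_lemma[of "1/4"] by simp
  have "lam\<^sup>2 * real n * Vc * exp (1/4) / 2 \<le> lam\<^sup>2 * real n * Vc * (3/2) / 2"
    using e14 Vc1 by (intro divide_right_mono mult_left_mono) auto
  also have "\<dots> = s\<^sup>2 * real n / (12 * Vc)" unfolding lam_def using Vc1 by (simp add: field_simps power2_eq_square)
  finally have t1: "lam\<^sup>2 * real n * Vc * exp (1/4) / 2 \<le> s\<^sup>2 * real n / (12 * Vc)" .
  have t2: "exp (1/4) * (2 * S\<^sup>2) \<le> 3 * S\<^sup>2" 
  proof -
    have "exp (1/4) * (2 * S\<^sup>2) \<le> 3/2 * (2 * S\<^sup>2)" by (rule mult_right_mono[OF e14]) simp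
    then show ?thesis by simp
  qed
  have t3: "lam * (real n * s) / 2 = s\<^sup>2 * real n / (6 * Vc)" unfolding lam_def using Vc1 by (simp add: field_simps power2_eq_square)
  have t4: "s\<^sup>2 * real n / (12 * Vc) \<ge> 4/3 * ln (real n)"
  proof -
    have "4/3 * ln (real n) * (12 * Vc) = 64 * Vc * ln (real n) / 4" by simp
    also have "\<dots> \<le> c * ln (real n) / 4" using c ln0 unfolding Vc_def by (intro divide_right_mono mult_right_mono) auto
    finally show ?thesis unfolding s2 using Vc1 by (simp add: pos_le_divide_eq mult.commute)
  qed
  have expo: "lam\<^sup>2 * real n * Vc * exp (1/4) / 2 + exp (1/4) * (2 * S\<^sup>2) - lam * (real n * s) / 2 \<le> 3 * S\<^sup>2 - 4/3 * ln (real n)"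
    using t1 t2 t3 t4 by linarith
  have "exp (3 * S\<^sup>2 - 4/3 * ln (real n)) = exp (3 * S\<^sup>2) * real n powr (-4/3)"
  proof -
    have "real n powr (-4/3) = exp (-4/3 * ln (real n))" using n0 by (simp add: powr_def)
    then show ?thesis by (simp add: mult_exp_exp)
  qed
  moreover have "exp (lam\<^sup>2 * real n * Vc * exp (1/4) / 2 + exp (1/4) * (2 * S\<^sup>2) - lam * (real n * s) / 2) \<le> exp (3 * S\<^sup>2 - 4/3 * ln (real n))"
    using expo by simp
  ultimately show ?thesis using T by linarith
qed

end
end


lemma emp_Sm: assumes "n \<ge> 1"
  shows "emp_df X n \<omega> x - q = Sm X x q {1..n} \<omega> / real n"
proof -
  have "Sm X x q {1..n} \<omega> = (\<Sum>i\<in>{1..n}. ind X x i \<omega>) - real n * q"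
    unfolding Sm_def by (simp add: sum_subtractf)
  also have "(\<Sum>i\<in>{1..n}. ind X x i \<omega>) = real (card {i\<in>{1..n}. X i \<omega> \<le> x})"
    unfolding ind_def using sum.inter_filter[of "{1..n}" "\<lambda>_. (1::real)" "\<lambda>i. X i \<omega> \<le> x"] by simp
  finally show ?thesis using assms unfolding emp_df_def by (simp add: field_simps)
qed

lemma emp_mono: "mono (emp_df X n \<omega>)"
proof (rule monoI)
  fix x x' :: real assume "x \<le> x'"
  then have "card {i\<in>{1..n}. X i \<omega> \<le> x} \<le> card {i\<in>{1..n}. X i \<omega> \<le> x'}"
    by (intro card_mono) auto
  then show "emp_df X n \<omega> x \<le> emp_df X n \<omega> x'" unfolding emp_df_def
    by (intro divide_right_mono) auto
qed

lemma asy1: "((\<lambda>n::nat. sqrt (ln (real n) / (4 * real n)) * (real n powr (1/3) + 1)) \<longlongrightarrow> 0) sequentially"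
  by real_asymp
lemma asy2: "((\<lambda>n::nat. ln (real n) powr (3/2) / (sqrt (real n) * sqrt (ln (ln (real n))))) \<longlongrightarrow> 0) sequentially"
  by real_asymp
lemma asy3: "((\<lambda>n::nat. sqrt (ln (real n) / (4 * real n))) \<longlongrightarrow> 0) sequentially"
  by real_asymp
lemma asy4: "eventually (\<lambda>n::nat. (2 * ((ln (real n) powr (3/2) / (sqrt (real n) * sqrt (ln (ln (real n)))))
   / sqrt (ln (real n) / (4 * real n))) + 2) * real n powr (-4/3) \<le> real n powr (-7/6)) sequentially"
  by real_asymp
lemma asy5: "eventually (\<lambda>n::nat. ln (ln (real n)) > 0) sequentially"
  by real_asymp


theorem theorem2p4:
  fixes M :: "'a measure" and X :: "nat \<Rightarrow> 'a \<Rightarrow> real"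
    and F f :: "real \<Rightarrow> real" and N :: "real set" and p \<theta> :: real
  assumes "prob_space M"
    and rv: "\<And>i. i \<ge> 1 \<Longrightarrow> X i \<in> borel_measurable M"
    and marg: "\<And>i x. i \<ge> 1 \<Longrightarrow> measure M {\<omega> \<in> space M. X i \<omega> \<le> x} = F x"
    and mix_mono: "\<And>n. n \<ge> 1 \<Longrightarrow> phi_mix M X (Suc n) \<le> phi_mix M X n"
    and mix_lim: "phi_mix M X \<longlonglongrightarrow> 0"
    and mix_sum: "summable (\<lambda>n. sqrt (phi_mix M X (Suc n)))"
    and p: "0 < p" "p < 1"
    and N: "open N" "Inf {x. F x \<ge> p} \<in> N"
    and dens: "\<And>x. x \<in> N \<Longrightarrow> (F has_real_derivative f x) (at x)"
    and fcont: "continuous_on N f"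
    and fpos: "\<And>x. x \<in> N \<Longrightarrow> f x > 0"
    and fbdd: "bdd_above (f ` N)"
    and \<theta>: "\<theta> > 0"
  shows "let \<xi> = Inf {x. F x \<ge> p};
             d = Sup (f ` N);
             C3 = 4 * (1 + 4 * (\<Sum>n. sqrt (phi_mix M X (Suc n))));
             \<tau> = (\<lambda>n::nat. sqrt (16 * C3 + \<theta>) * ln (real n) powr (3/2)
                    / (sqrt (real n) * sqrt (ln (ln (real n)))))
         in AE \<omega> in M. eventually (\<lambda>n. \<forall>x \<in> {\<xi> - \<tau> n .. \<xi> + \<tau> n}.
                \<bar>emp_df X n \<omega> x - F x\<bar> \<le> (1 + d) * sqrt ((16 * C3 + \<theta>) * ln (real n) / (4 * real n)))
              sequentially"
proof -
  interpret mixing M X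
    using assms(1) rv mix_mono by (simp add: mixing_def mixing_axioms_def)
  define S where "S = (\<Sum>n. sqrt (phi_mix M X (Suc n)))"
  define c where "c = 16 * (4 * (1 + 4 * S)) + \<theta>"
  define \<xi> where "\<xi> = Inf {x. F x \<ge> p}"
  define d where "d = Sup (f ` N)"
  define T where "T = (\<lambda>n::nat. ln (real n) powr (3/2) / (sqrt (real n) * sqrt (ln (ln (real n)))))"
  define U where "U = (\<lambda>n::nat. sqrt (ln (real n) / (4 * real n)))"
  define s where "s = (\<lambda>n::nat. sqrt (c * ln (real n) / (4 * real n)))"
  define \<tau> where "\<tau> = (\<lambda>n::nat. sqrt c * ln (real n) powr (3/2) / (sqrt (real n) * sqrt (ln (ln (real n)))))"
  have S0: "0 \<le> S" by (rule S_ge0[OF mix_sum S_def])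
  have c64: "c \<ge> 64 * (1 + 2 * S)" unfolding c_def using S0 \<theta> by simp
  have c0: "c > 0"
  proof -
    have "0 \<le> 16 * (4 * (1 + 4 * S))" using S0 by simp
    then show ?thesis unfolding c_def using \<theta> by linarith
  qed
  have sU: "s n = sqrt c * U n" for n
  proof -
    have "c * ln (real n) / (4 * real n) = c * (ln (real n) / (4 * real n))" by simp
    then show ?thesis unfolding s_def U_def by (metis real_sqrt_mult)
  qed
  have \<tau>T: "\<tau> n = sqrt c * T n" for n unfolding \<tau>_def T_def by simp
  have fd: "f x \<le> d" if "x \<in> N" for x unfolding d_def by (rule cSUP_upper[OF that fbdd])
  have d0: "0 \<le> d" using fd[OF N(2)] fpos[OF N(2)] by simp
  obtain e where e: "e > 0" "ball \<xi> e \<subseteq> N" using N unfolding \<xi>_def by (meson openE)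
  define \<delta> where "\<delta> = e / 2"
  have \<delta>0: "\<delta> > 0" unfolding \<delta>_def using e by simp
  have inN: "u \<in> N" if "\<xi> - \<delta> \<le> u" "u \<le> \<xi> + \<delta>" for u
  proof -
    have "dist \<xi> u < e" using that e unfolding \<delta>_def dist_real_def by (simp add: abs_le_iff)
    then show ?thesis using e by auto
  qed
  have lip: "F v - F u \<le> d * (v - u)" if "\<xi> - \<delta> \<le> u" "u \<le> v" "v \<le> \<xi> + \<delta>" for u v
  proof (cases "u = v")
    case False
    then have uv: "u < v" using that by simp
    have "\<exists>z. u < z \<and> z < v \<and> F v - F u = (v - u) * f z"
      by (rule MVT2[OF uv]) (rule dens, rule inN, use that in auto)
    then obtain z where z: "u < z" "z < v" "F v - F u = (v - u) * f z" by blast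
    have "f z \<le> d" by (rule fd, rule inN) (use that z in auto)
    then have "(v - u) * f z \<le> (v - u) * d" using uv by (intro mult_left_mono) auto
    then show ?thesis using z by (simp add: mult.commute)
  qed simp
  have monoF: "mono F"
  proof (rule monoI)
    fix x x' :: real assume "x \<le> x'"
    have [measurable]: "X 1 \<in> borel_measurable M" using rv by simp
    have "prob {\<omega>\<in>space M. X 1 \<omega> \<le> x} \<le> prob {\<omega>\<in>space M. X 1 \<omega> \<le> x'}"
    proof (rule finite_measure_mono)
      show "{\<omega>\<in>space M. X 1 \<omega> \<le> x'} \<in> events" by measurable
    qed (use \<open>x \<le> x'\<close> in auto)
    then show "F x \<le> F x'" using marg[of 1 x] marg[of 1 x'] by simp
  qed
  have E1: "eventually (\<lambda>n. s n * (real n powr (1/3) + 1) \<le> 3/4) sequentially"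
  proof -
    have "((\<lambda>n. sqrt c * (U n * (real n powr (1/3) + 1))) \<longlongrightarrow> sqrt c * 0) sequentially"
      by (rule tendsto_mult[OF tendsto_const]) (use asy1 in \<open>simp add: U_def\<close>)
    then have "eventually (\<lambda>n. sqrt c * (U n * (real n powr (1/3) + 1)) < 3/4) sequentially"
      by (intro order_tendstoD(2)) auto
    then show ?thesis by eventually_elim (simp add: sU mult.assoc)
  qed
  have E2: "eventually (\<lambda>n. \<tau> n + s n < \<delta>) sequentially"
  proof -
    have "((\<lambda>n. sqrt c * T n + sqrt c * U n) \<longlongrightarrow> sqrt c * 0 + sqrt c * 0) sequentially"
      by (intro tendsto_add tendsto_mult tendsto_const) (use asy2 asy3 in \<open>simp_all add: T_def U_def\<close>)
    then have "eventually (\<lambda>n. sqrt c * T n + sqrt c * U n < \<delta>) sequentially"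
      using \<delta>0 by (intro order_tendstoD(2)) auto
    then show ?thesis by eventually_elim (simp add: sU \<tau>T)
  qed
  have E3: "eventually (\<lambda>n. (2 * (T n / U n) + 2) * real n powr (-4/3) \<le> real n powr (-7/6)) sequentially"
    using asy4 unfolding T_def U_def .
  have E4: "eventually (\<lambda>n. ln (ln (real n)) > 0) sequentially" by (rule asy5)
  have E5: "eventually (\<lambda>n. n \<ge> 2) sequentially" by (rule eventually_ge_at_top)
  have "eventually (\<lambda>n. (s n * (real n powr (1/3) + 1) \<le> 3/4 \<and> \<tau> n + s n < \<delta>) \<and>
      ((2 * (T n / U n) + 2) * real n powr (-4/3) \<le> real n powr (-7/6) \<and> ln (ln (real n)) > 0 \<and> n \<ge> 2)) sequentially"
    using E1 E2 E3 E4 E5 by (intro eventually_conj) auto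
  then obtain n0 where n0: "\<And>n. n \<ge> n0 \<Longrightarrow> (s n * (real n powr (1/3) + 1) \<le> 3/4 \<and> \<tau> n + s n < \<delta>) \<and>
      ((2 * (T n / U n) + 2) * real n powr (-4/3) \<le> real n powr (-7/6) \<and> ln (ln (real n)) > 0 \<and> n \<ge> 2)"
    unfolding eventually_sequentially by blast
  have pos: "T n > 0 \<and> U n > 0 \<and> s n > 0 \<and> \<tau> n > 0" if "n \<ge> n0" for n
  proof -
    have l: "ln (ln (real n)) > 0" "n \<ge> 2" using n0[OF that] by auto
    have "ln (real n) > 0" using l by simp
    then have "ln (real n) > 1" using ln_gt_zero_iff[of "ln (real n)"] l(1) by simp
    then have "T n > 0" "U n > 0" unfolding T_def U_def using l by auto
    then show ?thesis using c0 sU \<tau>T by auto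
  qed
  define K where "K n = nat \<lceil>2 * \<tau> n / s n\<rceil>" for n
  define y where "y n j = \<xi> - \<tau> n + real j * s n" for n and j :: nat
  define B where "B n j = {\<omega>\<in>space M. \<bar>Sm X (y n j) (F (y n j)) {1..n} \<omega>\<bar> > real n * s n}" for n j
  define A where "A n = (if n \<ge> n0 then (\<Union>j\<in>{..K n}. B n j) else {})" for n
  have margq: "\<And>i. i \<ge> 1 \<Longrightarrow> prob {\<omega>\<in>space M. X i \<omega> \<le> z} = F z" for z using marg by simp
  have BM: "B n j \<in> events" for n j
  proof -
    have [measurable]: "Sm X (y n j) (F (y n j)) {1..n} \<in> borel_measurable M"
      by (rule Sm_M[OF margq]) auto
    show ?thesis unfolding B_def by measurable
  qed
  have AM: "A n \<in> events" for n unfolding A_def using BM by auto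
  define g where "g n = 4 * exp (3 * S\<^sup>2) * real n powr (-7/6)" for n :: nat
  have gsum: "summable g" unfolding g_def
    by (intro summable_mult) (simp add: summable_real_powr_iff)
  have PA: "norm (prob (A n)) \<le> g n" if "n \<ge> n0" for n
  proof -
    have nn: "n \<ge> 2" "s n * (real n powr (1/3) + 1) \<le> 3/4"
      "(2 * (T n / U n) + 2) * real n powr (-4/3) \<le> real n powr (-7/6)" using n0[OF that] by auto
    have ps: "T n > 0" "U n > 0" "s n > 0" "\<tau> n > 0" using pos[OF that] by auto
    have Bb: "prob (B n j) \<le> 4 * exp (3 * S\<^sup>2) * real n powr (-4/3)" for j
      unfolding B_def by (rule point_bound[OF mix_sum S_def marg c64 nn(1) _ nn(2)]) (auto simp: s_def)
    have "prob (A n) \<le> (\<Sum>j\<in>{..K n}. prob (B n j))"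
      unfolding A_def using that by (simp add: measure_UNION_le BM)
    also have "\<dots> \<le> (\<Sum>j\<in>{..K n}. 4 * exp (3 * S\<^sup>2) * real n powr (-4/3))" by (intro sum_mono Bb)
    also have "\<dots> = real (Suc (K n)) * (4 * exp (3 * S\<^sup>2) * real n powr (-4/3))" by simp
    also have "\<dots> \<le> (2 * (T n / U n) + 2) * (4 * exp (3 * S\<^sup>2) * real n powr (-4/3))"
    proof (rule mult_right_mono)
      have "\<tau> n / s n = T n / U n" using c0 by (simp add: sU \<tau>T)
      moreover have "real (K n) \<le> 2 * \<tau> n / s n + 1"
        
      proof -
        have z0: "0 < 2 * \<tau> n / s n" using ps by simp
        then have "real (nat \<lceil>2 * \<tau> n / s n\<rceil>) = of_int \<lceil>2 * \<tau> n / s n\<rceil>" by simp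
        also have "\<dots> \<le> 2 * \<tau> n / s n + 1" by (rule of_int_ceiling_le_add_one)
        finally show ?thesis by (simp add: K_def)
      qed
      ultimately show "real (Suc (K n)) \<le> 2 * (T n / U n) + 2" by simp
    qed simp
    also have "\<dots> = 4 * exp (3 * S\<^sup>2) * ((2 * (T n / U n) + 2) * real n powr (-4/3))" by simp
    also have "\<dots> \<le> 4 * exp (3 * S\<^sup>2) * real n powr (-7/6)" using nn(3) by (intro mult_left_mono) auto
    finally show ?thesis unfolding g_def by simp
  qed
  have Asum: "summable (\<lambda>n. prob (A n))"
    by (rule summable_comparison_test'[OF gsum PA])
  have BC: "AE \<omega> in M. eventually (\<lambda>n. \<omega> \<in> space M - A n) sequentially"
    by (rule borel_cantelli_AE1[OF AM _ Asum]) (simp add: less_top[symmetric])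
  have main: "AE \<omega> in M. eventually (\<lambda>n. \<forall>x \<in> {\<xi> - \<tau> n .. \<xi> + \<tau> n}.
                \<bar>emp_df X n \<omega> x - F x\<bar> \<le> (1 + d) * s n) sequentially"
    using BC
  proof (rule AE_mp[OF _ AE_I2], intro impI)
    fix \<omega> assume \<omega>: "\<omega> \<in> space M" and ev: "eventually (\<lambda>n. \<omega> \<in> space M - A n) sequentially"
    show "eventually (\<lambda>n. \<forall>x \<in> {\<xi> - \<tau> n .. \<xi> + \<tau> n}. \<bar>emp_df X n \<omega> x - F x\<bar> \<le> (1 + d) * s n) sequentially"
      using ev eventually_ge_at_top[of n0]
    proof eventually_elim
      case (elim n)
      have nn: "n \<ge> 2" "\<tau> n + s n < \<delta>" using n0[OF elim(2)] by auto
      have ps: "s n > 0" "\<tau> n > 0" using pos[OF elim(2)] by auto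
      have notB: "\<omega> \<notin> B n j" if "j \<le> K n" for j using elim that unfolding A_def by auto
      have Kup: "real (K n) * s n \<le> 2 * \<tau> n + s n"
      proof -
        have "real (K n) \<le> 2 * \<tau> n / s n + 1"
          
      proof -
        have z0: "0 < 2 * \<tau> n / s n" using ps by simp
        then have "real (nat \<lceil>2 * \<tau> n / s n\<rceil>) = of_int \<lceil>2 * \<tau> n / s n\<rceil>" by simp
        also have "\<dots> \<le> 2 * \<tau> n / s n + 1" by (rule of_int_ceiling_le_add_one)
        finally show ?thesis by (simp add: K_def)
      qed
        then have "real (K n) * s n \<le> (2 * \<tau> n / s n + 1) * s n" using ps by (intro mult_right_mono) auto
        moreover have "(2 * \<tau> n / s n + 1) * s n = 2 * \<tau> n + s n" using ps by (simp add: field_simps)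
        ultimately show ?thesis by linarith
      qed
      have Klo: "2 * \<tau> n \<le> real (K n) * s n"
      proof -
        have "2 * \<tau> n / s n \<le> real (K n)" unfolding K_def by linarith
        then show ?thesis using ps by (simp add: pos_divide_le_eq)
      qed
      show ?case
      proof
        fix x assume x: "x \<in> {\<xi> - \<tau> n .. \<xi> + \<tau> n}"
        show "\<bar>emp_df X n \<omega> x - F x\<bar> \<le> (1 + d) * s n"
        proof (rule grid_lemma[OF emp_mono monoF lip ps(1)])
          show "\<xi> - \<delta> \<le> \<xi> - \<tau> n" using nn ps by simp
          show "\<xi> - \<tau> n + real (K n) * s n \<le> \<xi> + \<delta>" using Kup nn by simp
          show "\<xi> + \<tau> n \<le> \<xi> - \<tau> n + real (K n) * s n" using Klo by simp
          show "0 \<le> d" by (rule d0)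
          show "\<xi> - \<tau> n \<le> x" "x \<le> \<xi> + \<tau> n" using x by auto
          fix j assume j: "j \<le> K n"
          have "\<bar>Sm X (y n j) (F (y n j)) {1..n} \<omega>\<bar> \<le> real n * s n"
            using notB[OF j] \<omega> unfolding B_def by auto
          moreover have "emp_df X n \<omega> (y n j) - F (y n j) = Sm X (y n j) (F (y n j)) {1..n} \<omega> / real n"
            by (rule emp_Sm) (use nn in simp)
          ultimately show "\<bar>emp_df X n \<omega> (\<xi> - \<tau> n + real j * s n) - F (\<xi> - \<tau> n + real j * s n)\<bar> \<le> s n"
            using nn unfolding y_def by (simp add: abs_div pos_divide_le_eq mult.commute)
        qed (auto)
      qed
    qed
  qed
  show ?thesis unfolding Let_def
    using main unfolding s_def \<tau>_def c_def S_def \<xi>_def d_def by simp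
qed


end
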